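(* Let $P$ be a compact and $\Sigma$-repeatable online minimization problem with at most $2^{n^{O(1)}}$ inputs of length $n$, and let $c$ be a constant independent of $n$. The following are equivalent: (1) for every $\varepsilon>0$ there exists a randomized $(c+\varepsilon)$-competitive $P$-algorithm without advice; (2) for every $\varepsilon>0$ there exists a deterministic $(c+\varepsilon)$-competitive $P$-algorithm with advice complexity $o(n)$.
   Context: Online minimization problems and advice: an input is $\sigma=(s,x_1,\dots,x_n)$ consisting of an initial state $s$ and $n$ requests; $n$ is the length. A deterministic online algorithm with advice computes answers $y_1,\dots,y_n$, $y_i$ computed from the content of an infinite advice tape (prepared by an oracle knowing the whole input), $s$ and $x_1,\dots,x_i$; each $y_i$ must lie in a nonempty set of valid answers. Advice complexity $b(n)$: the largest number of advice bits read over inputs of length at most $n$. Costs are non-negative reals; $\mathrm{OPT}$ is the optimal offline cost. A randomized algorithm (with advice complexity $b(n)$) is a probability distribution over deterministic algorithms (with advice complexity at most $b(n)$). $R$ is $c$-competitive if there is a constant $\alpha$ (independent of the input, including its initial state) with $\mathbb{E}[R(\sigma)]\leq c\,\mathrm{OPT}(\sigma)+\alpha$ for all $\sigma$. Repeated problem and $\Sigma$-repeatability: for $P$-inputs $\sigma_1,\dots,\sigma_r$ with the same initial state, $(\sigma_1;\dots;\sigma_r)$ is the concatenation of their requests with the first request of each $\sigma_i$ marked so the algorithm knows when a new round starts. $P^*_\Sigma$ has these as inputs ($r\geq1$); an algorithm outputs for each round a valid $P$-answer sequence $\gamma_i$ for $\sigma_i$ (remembering previous rounds) and pays $\sum_i\mathrm{cost}_P(\gamma_i,\sigma_i)$;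 $\mathrm{OPT}^*_\Sigma$ is its optimum. $P$ is $\Sigma$-repeatable if every fixed $P$-input has finitely many valid outputs and there are constants $k_1,k_2,k_3\geq0$ and a map $g$ from $P^*_\Sigma$-inputs to $P$-inputs such that for every $\sigma^*$ with $r$ rounds: $|g(\sigma^* )|\leq|\sigma^*|+k_1r$; for every deterministic $P$-algorithm $\mathrm{ALG}$ there is a deterministic $P^*_\Sigma$-algorithm $\mathrm{ALG}^*$ with $\mathrm{ALG}^*(\sigma^* )\leq\mathrm{ALG}(g(\sigma^* ))+k_2r$ for all $\sigma^*$; and $\mathrm{OPT}^*_\Sigma(\sigma^* )\geq\mathrm{OPT}(g(\sigma^* ))-k_3r$. Compactness: $P$ is compact if, whenever $c>1$ is a constant such that every randomized $P$-algorithm (without advice) has competitive ratio at least $c$, then for every $\varepsilon>0$ and every $\alpha\geq0$ there is an input distribution $p_{\alpha,\varepsilon}$ with finite support such that $\mathbb{E}_{p_{\alpha,\varepsilon}}[D(\sigma)]\geq(c-\varepsilon)\mathbb{E}_{p_{\alpha,\varepsilon}}[\mathrm{OPT}(\sigma)]+\alpha$ for every deterministic algorithm $D$ without advice. *)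

theory Defs
  imports "HOL-Probability.Probability" "HOL-Library.Landau_Symbols"
begin

text \<open>An online problem: a set of inputs (initial state, request sequence);
  the set of valid answers for the i-th request, given the initial state,
  the requests x_1..x_i and the previous answers y_1..y_(i-1); and the cost
  of an answer sequence on an input.\<close>

record ('s, 'x, 'y) online_problem =
  inputs :: "('s \<times> 'x list) set"
  valid  :: "'s \<Rightarrow> 'x list \<Rightarrow> 'y list \<Rightarrow> 'y set"
  cost   :: "'s \<Rightarrow> 'x list \<Rightarrow> 'y list \<Rightarrow> real"

definition valid_out :: "('s,'x,'y) online_problem \<Rightarrow> 's \<Rightarrow> 'x list \<Rightarrow> 'y list \<Rightarrow> bool" where
  "valid_out P s xs ys \<longleftrightarrow> length ys = length xs \<and>
     (\<forall>i<length xs. ys ! i \<in> valid P s (take (Suc i) xs) (take i ys))"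

definition wf_problem :: "('s,'x,'y) online_problem \<Rightarrow> bool" where
  "wf_problem P \<longleftrightarrow>
     (\<forall>(s,xs)\<in>inputs P. \<forall>i<length xs. \<forall>ys.
         valid_out P s (take i xs) ys \<longrightarrow> valid P s (take (Suc i) xs) ys \<noteq> {}) \<and>
     (\<forall>(s,xs)\<in>inputs P. \<forall>ys. valid_out P s xs ys \<longrightarrow> cost P s xs ys \<ge> 0)"

definition OPT :: "('s,'x,'y) online_problem \<Rightarrow> 's \<Rightarrow> 'x list \<Rightarrow> real" where
  "OPT P s xs = Inf {cost P s xs ys | ys. valid_out P s xs ys}"

text \<open>A deterministic algorithm without advice maps the initial state and the
  requests seen so far (x_1..x_i) to the answer y_i.\<close>
definition run :: "('s \<Rightarrow> 'x list \<Rightarrow> 'y) \<Rightarrow> 's \<Rightarrow> 'x list \<Rightarrow> 'y list" where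
  "run D s xs = map (\<lambda>i. D s (take (Suc i) xs)) [0..<length xs]"

definition det_alg :: "('s,'x,'y) online_problem \<Rightarrow> ('s \<Rightarrow> 'x list \<Rightarrow> 'y) \<Rightarrow> bool" where
  "det_alg P D \<longleftrightarrow> (\<forall>(s,xs)\<in>inputs P. valid_out P s xs (run D s xs))"

definition alg_cost :: "('s,'x,'y) online_problem \<Rightarrow> ('s \<Rightarrow> 'x list \<Rightarrow> 'y) \<Rightarrow> 's \<Rightarrow> 'x list \<Rightarrow> real" where
  "alg_cost P D s xs = cost P s xs (run D s xs)"

text \<open>A deterministic algorithm with advice additionally gets the infinite
  advice tape (nat => bool).  It reads at most m advice bits on an input when its
  answers on that input are determined by the first m bits of the tape.\<close>
definition reads_at_most ::
  "((nat \<Rightarrow> bool) \<Rightarrow> 's \<Rightarrow> 'x list \<Rightarrow> 'y) \<Rightarrow> (nat \<Rightarrow> bool) \<Rightarrow> 's \<Rightarrow> 'x list \<Rightarrow> nat \<Rightarrow> bool" where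
  "reads_at_most A t s xs m \<longleftrightarrow>
     (\<forall>t'. (\<forall>j<m. t' j = t j) \<longrightarrow> run (A t') s xs = run (A t) s xs)"

definition det_adv_alg :: "('s,'x,'y) online_problem \<Rightarrow> ((nat \<Rightarrow> bool) \<Rightarrow> 's \<Rightarrow> 'x list \<Rightarrow> 'y) \<Rightarrow> bool" where
  "det_adv_alg P A \<longleftrightarrow> (\<forall>t. det_alg P (A t))"

definition det_adv_competitive ::
  "('s,'x,'y) online_problem \<Rightarrow> ((nat \<Rightarrow> bool) \<Rightarrow> 's \<Rightarrow> 'x list \<Rightarrow> 'y) \<Rightarrow> (nat \<Rightarrow> nat) \<Rightarrow> real \<Rightarrow> bool" where
  "det_adv_competitive P A b c \<longleftrightarrow> det_adv_alg P A \<and>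
     (\<exists>\<alpha>::real. \<forall>(s,xs)\<in>inputs P. \<exists>t. reads_at_most A t s xs (b (length xs)) \<and>
         alg_cost P (A t) s xs \<le> c * OPT P s xs + \<alpha>)"

definition rand_alg :: "('s,'x,'y) online_problem \<Rightarrow> ('s \<Rightarrow> 'x list \<Rightarrow> 'y) measure \<Rightarrow> bool" where
  "rand_alg P R \<longleftrightarrow> prob_space R \<and> (\<forall>D\<in>space R. det_alg P D) \<and>
     (\<forall>(s,xs)\<in>inputs P. (\<lambda>D. alg_cost P D s xs) \<in> borel_measurable R)"

definition exp_cost :: "('s,'x,'y) online_problem \<Rightarrow> ('s \<Rightarrow> 'x list \<Rightarrow> 'y) measure \<Rightarrow> 's \<Rightarrow> 'x list \<Rightarrow> ennreal" where
  "exp_cost P R s xs = (\<integral>\<^sup>+ D. ennreal (alg_cost P D s xs) \<partial>R)"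

definition rand_competitive :: "('s,'x,'y) online_problem \<Rightarrow> ('s \<Rightarrow> 'x list \<Rightarrow> 'y) measure \<Rightarrow> real \<Rightarrow> bool" where
  "rand_competitive P R c \<longleftrightarrow>
     (\<exists>\<alpha>::real. \<forall>(s,xs)\<in>inputs P. enn2ereal (exp_cost P R s xs) \<le> ereal (c * OPT P s xs + \<alpha>))"

definition compact_problem :: "('s,'x,'y) online_problem \<Rightarrow> bool" where
  "compact_problem P \<longleftrightarrow>
     (\<forall>c::real. c > 1 \<longrightarrow>
        (\<forall>R c'. rand_alg P R \<and> c' < c \<longrightarrow> \<not> rand_competitive P R c') \<longrightarrow>
        (\<forall>\<epsilon>>0. \<forall>\<alpha>\<ge>0. \<exists>p :: ('s \<times> 'x list) pmf.
            finite (set_pmf p) \<and> set_pmf p \<subseteq> inputs P \<and>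
            (\<forall>D. det_alg P D \<longrightarrow>
               measure_pmf.expectation p (\<lambda>(s,xs). alg_cost P D s xs)
                 \<ge> (c - \<epsilon>) * measure_pmf.expectation p (\<lambda>(s,xs). OPT P s xs) + \<alpha>)))"

text \<open>Inputs of the repeated problem: an initial state s and r >= 1 rounds, each
  round a (nonempty, so that its first request can be marked) request sequence
  forming a P-input with initial state s.\<close>
definition rep_inputs :: "('s,'x,'y) online_problem \<Rightarrow> ('s \<times> 'x list list) set" where
  "rep_inputs P = {(s, xss). xss \<noteq> [] \<and> (\<forall>xs\<in>set xss. xs \<noteq> [] \<and> (s, xs) \<in> inputs P)}"

definition rep_length :: "'x list list \<Rightarrow> nat" where
  "rep_length xss = sum_list (map length xss)"

text \<open>A deterministic algorithm for the repeated problem maps the initial state,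
  the requests of all previous rounds, and the requests of the current round so
  far, to an answer.\<close>
definition rep_run :: "('s \<Rightarrow> 'x list list \<Rightarrow> 'x list \<Rightarrow> 'y) \<Rightarrow> 's \<Rightarrow> 'x list list \<Rightarrow> nat \<Rightarrow> 'y list" where
  "rep_run A s xss i = run (\<lambda>s' pre. A s (take i xss) pre) s (xss ! i)"

definition det_rep_alg :: "('s,'x,'y) online_problem \<Rightarrow> ('s \<Rightarrow> 'x list list \<Rightarrow> 'x list \<Rightarrow> 'y) \<Rightarrow> bool" where
  "det_rep_alg P A \<longleftrightarrow> (\<forall>(s,xss)\<in>rep_inputs P. \<forall>i<length xss. valid_out P s (xss ! i) (rep_run A s xss i))"

definition rep_cost :: "('s,'x,'y) online_problem \<Rightarrow> ('s \<Rightarrow> 'x list list \<Rightarrow> 'x list \<Rightarrow> 'y) \<Rightarrow> 's \<Rightarrow> 'x list list \<Rightarrow> real" where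
  "rep_cost P A s xss = (\<Sum>i<length xss. cost P s (xss ! i) (rep_run A s xss i))"

definition rep_OPT :: "('s,'x,'y) online_problem \<Rightarrow> 's \<Rightarrow> 'x list list \<Rightarrow> real" where
  "rep_OPT P s xss = Inf {(\<Sum>i<length xss. cost P s (xss ! i) (yss ! i)) | yss.
       length yss = length xss \<and> (\<forall>i<length xss. valid_out P s (xss ! i) (yss ! i))}"

definition sigma_repeatable :: "('s,'x,'y) online_problem \<Rightarrow> bool" where
  "sigma_repeatable P \<longleftrightarrow>
     (\<forall>(s,xs)\<in>inputs P. finite {ys. valid_out P s xs ys}) \<and>
     (\<exists>k1 k2 k3 :: real. k1 \<ge> 0 \<and> k2 \<ge> 0 \<and> k3 \<ge> 0 \<and>
      (\<exists>g :: 's \<times> 'x list list \<Rightarrow> 's \<times> 'x list.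
        (\<forall>(s,xss)\<in>rep_inputs P.
            g (s,xss) \<in> inputs P \<and>
            real (length (snd (g (s,xss)))) \<le> real (rep_length xss) + k1 * real (length xss) \<and>
            rep_OPT P s xss \<ge> OPT P (fst (g (s,xss))) (snd (g (s,xss))) - k3 * real (length xss)) \<and>
        (\<forall>D. det_alg P D \<longrightarrow> (\<exists>A. det_rep_alg P A \<and>
            (\<forall>(s,xss)\<in>rep_inputs P.
               rep_cost P A s xss \<le> alg_cost P D (fst (g (s,xss))) (snd (g (s,xss))) + k2 * real (length xss))))))"

text \<open>At most 2^(n^O(1)) inputs of length n (the bound is written with (n+1) so
  that it is meaningful also for n = 0).\<close>
definition few_inputs :: "('s,'x,'y) online_problem \<Rightarrow> bool" where
  "few_inputs P \<longleftrightarrow> (\<exists>C k :: nat. \<forall>n.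
     finite {\<sigma>\<in>inputs P. length (snd \<sigma>) = n} \<and>
     card {\<sigma>\<in>inputs P. length (snd \<sigma>) = n} \<le> 2 ^ (C * (n + 1) ^ k))"

end

theory Submission
  imports Defs "HOL-Real_Asymp.Real_Asymp"
begin


lemma length_run[simp]: "length (run D s xs) = length xs"
  by (simp add: run_def)

lemma nth_run: "i < length xs \<Longrightarrow> run D s xs ! i = D s (take (Suc i) xs)"
  by (simp add: run_def)

lemma run_cong:
  assumes "\<And>i. i < length xs \<Longrightarrow> D s (take (Suc i) xs) = D' s (take (Suc i) xs)"
  shows "run D s xs = run D' s xs"
  using assms by (simp add: run_def)

lemma wf_cost_nn:
  assumes "wf_problem P" "(s,xs) \<in> inputs P" "valid_out P s xs ys"
  shows "0 \<le> cost P s xs ys"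
proof -
  have "\<forall>(s,xs)\<in>inputs P. \<forall>ys. valid_out P s xs ys \<longrightarrow> cost P s xs ys \<ge> 0"
    using assms(1) unfolding wf_problem_def by (rule conjunct2)
  then show ?thesis using assms(2,3) by blast
qed

lemma OPT_props:
  assumes wf: "wf_problem P" and inp: "(s,xs) \<in> inputs P"
    and fin: "finite {ys. valid_out P s xs ys}"
    and ex: "valid_out P s xs ys0"
  shows "0 \<le> OPT P s xs" "\<And>ys. valid_out P s xs ys \<Longrightarrow> OPT P s xs \<le> cost P s xs ys"
    "\<exists>ys. valid_out P s xs ys \<and> cost P s xs ys = OPT P s xs"
proof -
  let ?C = "{cost P s xs ys | ys. valid_out P s xs ys}"
  have C: "?C = (\<lambda>ys. cost P s xs ys) ` {ys. valid_out P s xs ys}" by blast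
  have finC: "finite ?C" unfolding C using fin by (rule finite_imageI)
  have neC: "?C \<noteq> {}" using ex by blast
  have O: "OPT P s xs = Min ?C" unfolding OPT_def by (rule cInf_eq_Min[OF finC neC])
  show "\<And>ys. valid_out P s xs ys \<Longrightarrow> OPT P s xs \<le> cost P s xs ys"
  proof -
    fix ys assume "valid_out P s xs ys"
    then have "cost P s xs ys \<in> ?C" by blast
    then show "OPT P s xs \<le> cost P s xs ys" unfolding O using finC by (rule Min_le[rotated])
  qed
  have "Min ?C \<in> ?C" using finC neC by (rule Min_in)
  then obtain ys where ys0: "Min ?C = cost P s xs ys" "valid_out P s xs ys" by blast
  have ys: "valid_out P s xs ys" "cost P s xs ys = OPT P s xs" using ys0 O by auto
  then show "\<exists>ys. valid_out P s xs ys \<and> cost P s xs ys = OPT P s xs" by blast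
  show "0 \<le> OPT P s xs" using wf_cost_nn[OF wf inp ys(1)] ys(2) by simp
qed

lemma det_alg_valid: "det_alg P D \<Longrightarrow> (s,xs) \<in> inputs P \<Longrightarrow> valid_out P s xs (run D s xs)"
  unfolding det_alg_def by blast

lemma alg_cost_ge_OPT:
  assumes "wf_problem P" "(s,xs) \<in> inputs P" "finite {ys. valid_out P s xs ys}" "det_alg P D"
  shows "OPT P s xs \<le> alg_cost P D s xs" "0 \<le> OPT P s xs"
  using OPT_props(1,2)[OF assms(1-3) det_alg_valid[OF assms(4,2)]] det_alg_valid[OF assms(4,2)]
  unfolding alg_cost_def by auto

lemma rep_OPT_le:
  assumes wf: "wf_problem P" and ri: "(s,xss) \<in> rep_inputs P"
    and fin: "\<forall>(s,xs)\<in>inputs P. finite {ys. valid_out P s xs ys}"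
    and D: "det_alg P D"
  shows "rep_OPT P s xss \<le> (\<Sum>i<length xss. OPT P s (xss ! i))"
proof -
  have inp: "\<And>i. i < length xss \<Longrightarrow> (s, xss ! i) \<in> inputs P"
    using ri unfolding rep_inputs_def by auto
  have "\<forall>i. \<exists>ys. i < length xss \<longrightarrow> valid_out P s (xss!i) ys \<and> cost P s (xss!i) ys = OPT P s (xss!i)"
  proof (intro allI)
    fix i show "\<exists>ys. i < length xss \<longrightarrow> valid_out P s (xss!i) ys \<and> cost P s (xss!i) ys = OPT P s (xss!i)"
    proof (cases "i < length xss")
      case True
      have "finite {ys. valid_out P s (xss!i) ys}" using fin inp[OF True] by blast
      from OPT_props(3)[OF wf inp[OF True] this det_alg_valid[OF D inp[OF True]]] show ?thesis by blast
    qed simp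
  qed
  then obtain f where f: "\<And>i. i < length xss \<Longrightarrow> valid_out P s (xss!i) (f i) \<and> cost P s (xss!i) (f i) = OPT P s (xss!i)"
    by (metis (no_types, lifting) choice)
  define yss where "yss = map f [0..<length xss]"
  have mem: "(\<Sum>i<length xss. cost P s (xss ! i) (yss ! i)) \<in> {(\<Sum>i<length xss. cost P s (xss ! i) (yss ! i)) | yss.
       length yss = length xss \<and> (\<forall>i<length xss. valid_out P s (xss ! i) (yss ! i))}"
  proof -
    have "length yss = length xss \<and> (\<forall>i<length xss. valid_out P s (xss ! i) (yss ! i))"
      using f by (simp add: yss_def)
    then show ?thesis by blast
  qed
  have bdd: "bdd_below {(\<Sum>i<length xss. cost P s (xss ! i) (yss ! i)) | yss.
       length yss = length xss \<and> (\<forall>i<length xss. valid_out P s (xss ! i) (yss ! i))}"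
  proof (rule bdd_belowI[where m=0], clarify)
    fix yss assume a: "\<forall>i<length xss. valid_out P s (xss ! i) (yss ! i)"
    show "0 \<le> (\<Sum>i<length xss. cost P s (xss ! i) (yss ! i))"
    proof (rule sum_nonneg)
      fix i assume "i \<in> {..<length xss}"
      then have "i < length xss" by simp
      then show "0 \<le> cost P s (xss ! i) (yss ! i)" using wf_cost_nn[OF wf inp] a by blast
    qed
  qed
  have "rep_OPT P s xss \<le> (\<Sum>i<length xss. cost P s (xss ! i) (yss ! i))"
    unfolding rep_OPT_def by (rule cInf_lower[OF mem bdd])
  also have "\<dots> = (\<Sum>i<length xss. OPT P s (xss ! i))"
    using f by (intro sum.cong) (auto simp: yss_def)
  finally show ?thesis .
qed


fun evs :: "'l set \<Rightarrow> ('l \<Rightarrow> real) \<Rightarrow> nat \<Rightarrow> ('l list \<Rightarrow> real) \<Rightarrow> 'l list \<Rightarrow> real" where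
  "evs S w 0 f pre = f pre"
| "evs S w (Suc r) f pre = (\<Sum>x\<in>S. w x * evs S w r f (pre @ [x]))"

lemma evs_mono:
  assumes "\<And>x. x \<in> S \<Longrightarrow> 0 \<le> w x" "\<And>xs. f xs \<le> g xs"
  shows "evs S w r f pre \<le> evs S w r g pre"
  using assms(2)
proof (induction r arbitrary: pre)
  case 0 then show ?case by simp
next
  case (Suc r)
  show ?case unfolding evs.simps
    by (rule sum_mono, rule mult_left_mono) (use Suc assms(1) in auto)
qed

lemma evs_sum:
  assumes "finite T"
  shows "evs S w r (\<lambda>xs. \<Sum>t\<in>T. f t xs) pre = (\<Sum>t\<in>T. evs S w r (f t) pre)"
proof (induction r arbitrary: pre)
  case 0 then show ?case by simp
next
  case (Suc r)
  show ?case unfolding evs.simps Suc by (simp add: sum_distrib_left sum.swap[of _ S])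
qed

lemma evs_cmult:
  "evs S w r (\<lambda>xs. a * f xs) pre = a * evs S w r f pre"
proof (induction r arbitrary: pre)
  case 0 then show ?case by simp
next
  case (Suc r)
  show ?case unfolding evs.simps Suc by (simp add: sum_distrib_left algebra_simps)
qed

lemma evs_one:
  assumes "sum w S = 1" and "\<And>ext. set ext \<subseteq> S \<Longrightarrow> length ext = r \<Longrightarrow> f (pre @ ext) = 1"
  shows "evs S w r f pre = 1"
  using assms(2)
proof (induction r arbitrary: pre)
  case 0 then show ?case using 0[of "[]"] by simp
next
  case (Suc r)
  have "evs S w r f (pre @ [x]) = 1" if "x \<in> S" for x
    using Suc.IH[of "pre @ [x]"] Suc.prems[of "x # _"] that by auto
  then have "evs S w (Suc r) f pre = sum w S" by simp
  then show ?case using assms(1) by simp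
qed

lemma evs_exp:
  fixes Y :: "'l list \<Rightarrow> nat \<Rightarrow> real"
  assumes w: "\<And>x. x \<in> S \<Longrightarrow> 0 \<le> w x" and q: "0 \<le> q"
    and pfx: "\<And>pre x i. i < length pre \<Longrightarrow> Y (pre @ [x]) i = Y pre i"
    and rnd: "\<And>pre. set pre \<subseteq> S \<Longrightarrow> (\<Sum>x\<in>S. w x * exp (- lam * Y (pre @ [x]) (length pre))) \<le> q"
    and pre: "set pre \<subseteq> S"
  shows "evs S w r (\<lambda>xs. exp (- lam * (\<Sum>i<length xs. Y xs i))) pre
          \<le> q ^ r * exp (- lam * (\<Sum>i<length pre. Y pre i))"
  using pre
proof (induction r arbitrary: pre)
  case 0 then show ?case by simp
next
  case (Suc r)
  let ?F = "\<lambda>xs. exp (- lam * (\<Sum>i<length xs. Y xs i))"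
  have split: "?F (pre @ [x]) = ?F pre * exp (- lam * Y (pre @ [x]) (length pre))" for x
  proof -
    have "(\<Sum>i<length (pre @ [x]). Y (pre @ [x]) i) = (\<Sum>i<length pre. Y (pre@[x]) i) + Y (pre @ [x]) (length pre)"
      by simp
    also have "(\<Sum>i<length pre. Y (pre@[x]) i) = (\<Sum>i<length pre. Y pre i)"
      by (rule sum.cong) (auto simp: pfx)
    finally show ?thesis by (simp add: algebra_simps exp_add[symmetric])
  qed
  have "evs S w (Suc r) ?F pre = (\<Sum>x\<in>S. w x * evs S w r ?F (pre @ [x]))" by simp
  also have "\<dots> \<le> (\<Sum>x\<in>S. w x * (q ^ r * ?F (pre @ [x])))"
  proof (rule sum_mono, rule mult_left_mono)
    fix x assume "x \<in> S"
    then show "evs S w r ?F (pre @ [x]) \<le> q ^ r * ?F (pre @ [x])"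
      using Suc.IH[of "pre @ [x]"] Suc.prems by simp
    show "0 \<le> w x" using w \<open>x \<in> S\<close> .
  qed
  also have "\<dots> = q ^ r * ?F pre * (\<Sum>x\<in>S. w x * exp (- lam * Y (pre @ [x]) (length pre)))"
    unfolding split by (simp add: sum_distrib_left algebra_simps)
  also have "\<dots> \<le> q ^ r * ?F pre * q"
    by (rule mult_left_mono[OF rnd[OF Suc.prems]]) (use q in simp)
  finally show ?case by (simp add: algebra_simps)
qed

lemma conc:
  fixes Y :: "'t \<Rightarrow> 'l list \<Rightarrow> nat \<Rightarrow> real"
  assumes finS: "finite S" and w: "\<And>x. x \<in> S \<Longrightarrow> 0 \<le> w x" and sw: "sum w S = 1"
    and finT: "finite T" and q: "0 \<le> q" and lam: "0 \<le> lam"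
    and pfx: "\<And>t pre x i. i < length pre \<Longrightarrow> Y t (pre @ [x]) i = Y t pre i"
    and rnd: "\<And>t pre. t \<in> T \<Longrightarrow> set pre \<subseteq> S \<Longrightarrow> (\<Sum>x\<in>S. w x * exp (- lam * Y t (pre @ [x]) (length pre))) \<le> q"
    and good: "\<And>xss. set xss \<subseteq> S \<Longrightarrow> length xss = r \<Longrightarrow> \<exists>t\<in>T. (\<Sum>i<r. Y t xss i) \<le> beta"
  shows "1 \<le> real (card T) * exp (lam * beta) * q ^ r"
proof -
  let ?G = "\<lambda>t xs. exp (lam * beta) * exp (- lam * (\<Sum>i<length xs. Y t xs i))"
  let ?I = "\<lambda>xs. if length xs = r \<and> (\<exists>t\<in>T. (\<Sum>i<r. Y t xs i) \<le> beta) then 1 else (0::real)"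
  have "1 = evs S w r ?I []"
    by (rule evs_one[symmetric, OF sw]) (use good in auto)
  also have "\<dots> \<le> evs S w r (\<lambda>xs. \<Sum>t\<in>T. ?G t xs) []"
  proof (rule evs_mono[OF w])
    fix xs
    show "?I xs \<le> (\<Sum>t\<in>T. ?G t xs)"
    proof (cases "length xs = r \<and> (\<exists>t\<in>T. (\<Sum>i<r. Y t xs i) \<le> beta)")
      case True
      then obtain t where t: "t \<in> T" "(\<Sum>i<r. Y t xs i) \<le> beta" "length xs = r" by blast
      have "1 \<le> exp (lam * beta - lam * (\<Sum>i<r. Y t xs i))"
        using mult_left_mono[OF t(2) lam] by simp
      also have "\<dots> = ?G t xs" using t(3) by (simp add: exp_diff exp_minus field_simps)
      also have "\<dots> \<le> (\<Sum>t\<in>T. ?G t xs)"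
        by (rule member_le_sum[OF t(1) _ finT]) simp
      finally show ?thesis using True by simp
    next
      case False
      then have "?I xs = 0" by auto
      then show ?thesis by (simp add: sum_nonneg)
    qed
  qed
  also have "\<dots> = (\<Sum>t\<in>T. evs S w r (?G t) [])" by (rule evs_sum[OF finT])
  also have "\<dots> \<le> (\<Sum>t\<in>T. exp (lam * beta) * q ^ r)"
  proof (rule sum_mono)
    fix t assume t: "t \<in> T"
    have "evs S w r (?G t) [] = exp (lam * beta) * evs S w r (\<lambda>xs. exp (- lam * (\<Sum>i<length xs. Y t xs i))) []"
      by (rule evs_cmult)
    also have "\<dots> \<le> exp (lam * beta) * (q ^ r * exp (- lam * (\<Sum>i<length []. Y t [] i)))"
    proof (rule mult_left_mono)
      show "evs S w r (\<lambda>xs. exp (- lam * (\<Sum>i<length xs. Y t xs i))) [] \<le> q ^ r * exp (- lam * (\<Sum>i<length []. Y t [] i))"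
      proof -
        have p1: "\<And>pre x i. i < length pre \<Longrightarrow> Y t (pre @ [x]) i = Y t pre i" by (rule pfx)
        have p2: "\<And>pre. set pre \<subseteq> S \<Longrightarrow> (\<Sum>x\<in>S. w x * exp (- lam * Y t (pre @ [x]) (length pre))) \<le> q"
          by (rule rnd[OF t])
        show ?thesis using evs_exp[of S w q "Y t" lam "[]" r, OF w q p1 p2] by simp
      qed
    qed simp
    finally show "evs S w r (?G t) [] \<le> exp (lam * beta) * q ^ r" by simp
  qed
  also have "\<dots> = real (card T) * exp (lam * beta) * q ^ r" by simp
  finally show ?thesis .
qed


lemma exp_neg_quad:
  fixes z :: real assumes "\<bar>z\<bar> \<le> 1"
  shows "exp (- z) \<le> 1 - z + z\<^sup>2"
proof (cases "z \<le> 0")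
  case True
  have "exp (-z) \<le> 1 + (-z) + (-z)\<^sup>2" by (rule exp_bound) (use assms True in auto)
  then show ?thesis by simp
next
  case False
  have e: "1 + z \<le> exp z" by (rule exp_ge_add_one_self)
  have nn: "0 \<le> 1 - z + z\<^sup>2"
  proof -
    have "0 \<le> (z - 1/2)\<^sup>2" by simp
    also have "(z - 1/2)\<^sup>2 = z\<^sup>2 - z + 1/4" by (simp add: power2_eq_square algebra_simps)
    finally show ?thesis by simp
  qed
  have eq: "(1 + z) * (1 - z + z\<^sup>2) = 1 + z^3" by (simp add: algebra_simps power2_eq_square power3_eq_cube)
  have c: "0 \<le> z^3" using False by simp
  have "(1 + z) * (1 - z + z\<^sup>2) \<le> exp z * (1 - z + z\<^sup>2)" by (rule mult_right_mono[OF e nn])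
  then have "1 \<le> exp z * (1 - z + z\<^sup>2)" using eq c by linarith
  then show ?thesis by (simp add: exp_minus field_simps)
qed

lemma round_bound:
  fixes Y w :: "'l \<Rightarrow> real"
  assumes finS: "finite S" and w: "\<And>x. x \<in> S \<Longrightarrow> 0 \<le> w x" and sw: "sum w S = 1"
    and Yb: "\<And>x. x \<in> S \<Longrightarrow> \<bar>Y x\<bar> \<le> W" and E: "alpha \<le> (\<Sum>x\<in>S. w x * Y x)"
    and lam: "0 \<le> lam" "lam * W \<le> 1"
  shows "(\<Sum>x\<in>S. w x * exp (- lam * Y x)) \<le> exp (- lam * alpha + lam\<^sup>2 * W\<^sup>2)"
proof -
  have "(\<Sum>x\<in>S. w x * exp (- lam * Y x)) \<le> (\<Sum>x\<in>S. w x * (1 - lam * Y x + lam\<^sup>2 * W\<^sup>2))"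
  proof (rule sum_mono, rule mult_left_mono)
    fix x assume x: "x \<in> S"
    have a: "\<bar>lam * Y x\<bar> \<le> 1"
      using mult_left_mono[OF Yb[OF x] lam(1)] lam by (simp add: abs_mult)
    have "exp (- (lam * Y x)) \<le> 1 - lam * Y x + (lam * Y x)\<^sup>2" by (rule exp_neg_quad[OF a])
    also have "(lam * Y x)\<^sup>2 \<le> lam\<^sup>2 * W\<^sup>2"
    proof -
      have "\<bar>lam * Y x\<bar> \<le> lam * W" using mult_left_mono[OF Yb[OF x] lam(1)] lam by (simp add: abs_mult)
      then have "\<bar>lam * Y x\<bar>\<^sup>2 \<le> (lam * W)\<^sup>2" by (rule power_mono) simp
      then show ?thesis by (simp add: power_mult_distrib)
    qed
    finally show "exp (- lam * Y x) \<le> 1 - lam * Y x + lam\<^sup>2 * W\<^sup>2" by simp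
    show "0 \<le> w x" using w x .
  qed
  also have "\<dots> = sum w S - lam * (\<Sum>x\<in>S. w x * Y x) + lam\<^sup>2 * W\<^sup>2 * sum w S"
    by (simp add: algebra_simps sum_distrib_left sum_subtractf sum.distrib sum_distrib_right)
  also have "\<dots> = 1 - lam * (\<Sum>x\<in>S. w x * Y x) + lam\<^sup>2 * W\<^sup>2" using sw by simp
  also have "\<dots> \<le> 1 + (- lam * alpha + lam\<^sup>2 * W\<^sup>2)"
    using mult_left_mono[OF E lam(1)] by simp
  also have "\<dots> \<le> exp (- lam * alpha + lam\<^sup>2 * W\<^sup>2)" by (rule exp_ge_add_one_self)
  finally show ?thesis .
qed

definition trunc_tapes :: "nat \<Rightarrow> (nat \<Rightarrow> bool) set" where
  "trunc_tapes M = (\<lambda>X j. j \<in> X) ` Pow {..<M}"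

lemma trunc_tapes_finite: "finite (trunc_tapes M)"
  unfolding trunc_tapes_def by simp

lemma trunc_tapes_card: "card (trunc_tapes M) \<le> 2 ^ M"
proof -
  have "card (trunc_tapes M) \<le> card (Pow {..<M})"
    unfolding trunc_tapes_def by (rule card_image_le) simp
  also have "\<dots> = 2 ^ M" by (simp add: card_Pow)
  finally show ?thesis .
qed

lemma trunc_tapes_mem: "(\<lambda>j. j < M \<and> t j) \<in> trunc_tapes M"
proof -
  have "(\<lambda>j. j < M \<and> t j) = (\<lambda>j. j \<in> {j. j < M \<and> t j})" by auto
  then show ?thesis unfolding trunc_tapes_def by (intro image_eqI[where x="{j. j < M \<and> t j}"]) auto
qed


lemma valid_out_Nil: "valid_out P s [] ys \<longleftrightarrow> ys = []"
  by (simp add: valid_out_def)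

lemma OPT_Nil: "OPT P s [] = cost P s [] []"
proof -
  have "{cost P s [] ys | ys. valid_out P s [] ys} = {cost P s [] []}"
    by (auto simp: valid_out_Nil)
  then show ?thesis unfolding OPT_def by simp
qed

lemma alg_cost_Nil: "alg_cost P D s [] = cost P s [] []"
  by (simp add: alg_cost_def run_def)

lemma hard_state:
  fixes P :: "('s,'x,'y) online_problem"
  assumes wf: "wf_problem P"
    and D0: "det_alg P D0"
    and ch: "1 \<le> ch" and al: "0 < al"
    and pfin: "finite (set_pmf p)" and psub: "set_pmf p \<subseteq> inputs P"
    and hard: "\<forall>D. det_alg P D \<longrightarrow> measure_pmf.expectation p (\<lambda>(s,xs). alg_cost P D s xs)
                 \<ge> ch * measure_pmf.expectation p (\<lambda>(s,xs). OPT P s xs) + al"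
  shows "\<exists>s S w. finite S \<and> S \<noteq> {} \<and> (\<forall>x\<in>S. x \<noteq> [] \<and> (s,x) \<in> inputs P) \<and> (\<forall>x\<in>S. 0 \<le> w x) \<and> sum w S = 1 \<and>
     (\<forall>D. det_alg P D \<longrightarrow> al \<le> (\<Sum>x\<in>S. w x * (alg_cost P D s x - ch * OPT P s x)))"
proof (rule ccontr)
  assume neg: "\<not> ?thesis"
  define U where "U = set_pmf p"
  define Z where "Z = (\<lambda>D (s::'s) (xs::'x list). alg_cost P D s xs - ch * OPT P s xs)"
  define N where "N = {\<sigma>\<in>U. snd \<sigma> \<noteq> []}"
  define E0 where "E0 = {\<sigma>\<in>U. snd \<sigma> = []}"
  define SS where "SS = (\<lambda>s'. {x. (s',x) \<in> N})"
  define m where "m = (\<lambda>s'. \<Sum>x\<in>SS s'. pmf p (s',x))"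
  have finU: "finite U" using pfin by (simp add: U_def)
  have finN: "finite N" using finU by (simp add: N_def)
  have finSS: "finite (SS s')" for s'
  proof -
    have "SS s' = snd ` {\<sigma>\<in>N. fst \<sigma> = s'}" by (force simp: SS_def)
    then show ?thesis using finN by simp
  qed
  have expd: "measure_pmf.expectation p (\<lambda>(s,xs). alg_cost P D s xs) - ch * measure_pmf.expectation p (\<lambda>(s,xs). OPT P s xs)
      = (\<Sum>\<sigma>\<in>U. pmf p \<sigma> * Z D (fst \<sigma>) (snd \<sigma>))" for D
  proof -
    have e1: "measure_pmf.expectation p (\<lambda>(s,xs). alg_cost P D s xs) = (\<Sum>\<sigma>\<in>U. (case \<sigma> of (s,xs) \<Rightarrow> alg_cost P D s xs) * pmf p \<sigma>)"
      by (rule integral_measure_pmf_real[OF finU]) (simp add: U_def)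
    have e2: "measure_pmf.expectation p (\<lambda>(s,xs). OPT P s xs) = (\<Sum>\<sigma>\<in>U. (case \<sigma> of (s,xs) \<Rightarrow> OPT P s xs) * pmf p \<sigma>)"
      by (rule integral_measure_pmf_real[OF finU]) (simp add: U_def)
    show ?thesis unfolding e1 e2 Z_def
      by (simp add: sum_distrib_left sum_subtractf[symmetric] algebra_simps split_beta)
  qed
  have E0nonpos: "pmf p \<sigma> * Z D (fst \<sigma>) (snd \<sigma>) \<le> 0" if "\<sigma> \<in> E0" for D \<sigma>
  proof -
    define s where "s = fst \<sigma>"
    have "snd \<sigma> = []" using that by (simp add: E0_def)
    then have \<sigma>: "\<sigma> = (s, [])" unfolding s_def by (metis prod.collapse)
    have inp: "(s, []) \<in> inputs P" using that psub \<sigma> by (auto simp: E0_def U_def)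
    have "0 \<le> cost P s [] []" by (rule wf_cost_nn[OF wf inp]) (simp add: valid_out_Nil)
    then have "Z D s [] \<le> 0" using ch by (simp add: Z_def alg_cost_Nil OPT_Nil mult_left_le_one_le algebra_simps)
        (metis mult_left_mono diff_ge_0_iff_ge mult.commute mult.right_neutral)
    then show ?thesis using \<sigma> by (simp add: mult_nonneg_nonpos)
  qed
  have UNE: "U = N \<union> E0" "N \<inter> E0 = {}" by (auto simp: N_def E0_def)
  have groupN: "(\<Sum>\<sigma>\<in>N. f \<sigma>) = (\<Sum>s'\<in>fst ` N. \<Sum>x\<in>SS s'. f (s', x))" for f :: "'s \<times> 'x list \<Rightarrow> real"
  proof -
    have "(\<Sum>\<sigma>\<in>N. f \<sigma>) = (\<Sum>s'\<in>fst ` N. \<Sum>\<sigma>\<in>{\<sigma>\<in>N. fst \<sigma> = s'}. f \<sigma>)"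
      by (rule sum.image_gen[OF finN])
    also have "\<dots> = (\<Sum>s'\<in>fst ` N. \<Sum>x\<in>SS s'. f (s', x))"
    proof (rule sum.cong[OF refl])
      fix s'
      have "{\<sigma>\<in>N. fst \<sigma> = s'} = Pair s' ` SS s'" by (force simp: SS_def)
      then show "(\<Sum>\<sigma>\<in>{\<sigma>\<in>N. fst \<sigma> = s'}. f \<sigma>) = (\<Sum>x\<in>SS s'. f (s', x))"
        by (simp add: sum.reindex inj_on_def)
    qed
    finally show ?thesis .
  qed
  have mpos: "0 < m s'" if s'N: "s' \<in> fst ` N" for s'
  proof -
    obtain x where x: "x \<in> SS s'" using s'N by (force simp: SS_def)
    have pos: "\<And>x. x \<in> SS s' \<Longrightarrow> 0 < pmf p (s', x)"
      by (rule pmf_positive) (auto simp: SS_def N_def U_def)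
    have "0 < pmf p (s', x)" using pos[OF x] .
    also have "\<dots> \<le> m s'" unfolding m_def
      by (rule member_le_sum[OF x _ finSS]) (use pos in \<open>auto intro: less_imp_le\<close>)
    finally show ?thesis .
  qed
  have SSprops: "\<forall>x\<in>SS s'. x \<noteq> [] \<and> (s',x) \<in> inputs P" for s'
    using psub by (auto simp: SS_def N_def U_def)
  have nothard: "\<exists>D. det_alg P D \<and> (\<Sum>x\<in>SS s'. pmf p (s',x) * Z D s' x) < al * m s'"
    if s': "s' \<in> fst ` N" for s'
  proof (rule ccontr)
    assume nh: "\<not> ?thesis"
    define w where "w = (\<lambda>x. pmf p (s',x) / m s')"
    have "SS s' \<noteq> {}" using s' by (force simp: SS_def)
    moreover have "\<forall>x\<in>SS s'. 0 \<le> w x" using mpos[OF s'] by (simp add: w_def)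
    moreover have "sum w (SS s') = 1" using mpos[OF s'] by (simp add: w_def m_def sum_divide_distrib[symmetric])
    moreover have "\<forall>D. det_alg P D \<longrightarrow> al \<le> (\<Sum>x\<in>SS s'. w x * (alg_cost P D s' x - ch * OPT P s' x))"
    proof (intro allI impI)
      fix D assume D: "det_alg P D"
      have "al * m s' \<le> (\<Sum>x\<in>SS s'. pmf p (s',x) * Z D s' x)" using nh D by force
      then have "al \<le> (\<Sum>x\<in>SS s'. pmf p (s',x) * Z D s' x) / m s'" using mpos[OF s'] by (simp add: field_simps)
      also have "\<dots> = (\<Sum>x\<in>SS s'. w x * (alg_cost P D s' x - ch * OPT P s' x))"
        by (simp add: w_def Z_def sum_divide_distrib)
      finally show "al \<le> (\<Sum>x\<in>SS s'. w x * (alg_cost P D s' x - ch * OPT P s' x))" .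
    qed
    ultimately show False using neg finSS[of s'] SSprops[of s'] by blast
  qed
  define Dsel where "Dsel = (\<lambda>s'. SOME D. det_alg P D \<and> (\<Sum>x\<in>SS s'. pmf p (s',x) * Z D s' x) < al * m s')"
  have Dsel: "det_alg P (Dsel s') \<and> (\<Sum>x\<in>SS s'. pmf p (s',x) * Z (Dsel s') s' x) < al * m s'"
    if "s' \<in> fst ` N" for s'
    unfolding Dsel_def by (rule someI_ex[OF nothard[OF that]])
  define Dc where "Dc = (\<lambda>s' pre. if s' \<in> fst ` N then Dsel s' s' pre else D0 s' pre)"
  have runDc: "run Dc s' xs = run (if s' \<in> fst ` N then Dsel s' else D0) s' xs" for s' xs
    by (rule run_cong) (simp add: Dc_def)
  have Dc: "det_alg P Dc"
    unfolding det_alg_def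
  proof (clarify)
    fix s' xs assume inp: "(s', xs) \<in> inputs P"
    show "valid_out P s' xs (run Dc s' xs)"
      unfolding runDc using det_alg_valid[OF D0 inp] det_alg_valid[OF conjunct1[OF Dsel] inp] by auto
  qed
  have ZDc: "Z Dc s' x = Z (Dsel s') s' x" if "s' \<in> fst ` N" for s' x
    using runDc[of s' x] that by (simp add: Z_def alg_cost_def)
  have "(\<Sum>\<sigma>\<in>U. pmf p \<sigma> * Z Dc (fst \<sigma>) (snd \<sigma>)) = (\<Sum>\<sigma>\<in>N. pmf p \<sigma> * Z Dc (fst \<sigma>) (snd \<sigma>)) + (\<Sum>\<sigma>\<in>E0. pmf p \<sigma> * Z Dc (fst \<sigma>) (snd \<sigma>))"
    unfolding UNE(1) by (rule sum.union_disjoint) (use finU UNE in auto)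
  also have "\<dots> \<le> (\<Sum>\<sigma>\<in>N. pmf p \<sigma> * Z Dc (fst \<sigma>) (snd \<sigma>))"
    using sum_nonpos[of E0 "\<lambda>\<sigma>. pmf p \<sigma> * Z Dc (fst \<sigma>) (snd \<sigma>)"] E0nonpos by auto
  also have "\<dots> < al"
  proof (cases "N = {}")
    case True then show ?thesis using al by simp
  next
    case False
    have "(\<Sum>\<sigma>\<in>N. pmf p \<sigma> * Z Dc (fst \<sigma>) (snd \<sigma>)) = (\<Sum>s'\<in>fst ` N. \<Sum>x\<in>SS s'. pmf p (s',x) * Z Dc s' x)"
      by (subst groupN) simp
    also have "\<dots> = (\<Sum>s'\<in>fst ` N. \<Sum>x\<in>SS s'. pmf p (s',x) * Z (Dsel s') s' x)"
      by (rule sum.cong[OF refl], rule sum.cong[OF refl]) (simp add: ZDc)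
    also have "\<dots> < (\<Sum>s'\<in>fst ` N. al * m s')"
      by (rule sum_strict_mono) (use finN False Dsel in auto)
    also have "\<dots> = al * (\<Sum>\<sigma>\<in>N. pmf p \<sigma>)"
      by (simp add: groupN m_def sum_distrib_left)
    also have "\<dots> \<le> al * 1"
    proof (rule mult_left_mono)
      have "(\<Sum>\<sigma>\<in>N. pmf p \<sigma>) \<le> (\<Sum>\<sigma>\<in>U. pmf p \<sigma>)"
        by (rule sum_mono2[OF finU]) (auto simp: N_def)
      also have "\<dots> = 1" using sum_pmf_eq_1[OF finU] by (simp add: U_def)
      finally show "(\<Sum>\<sigma>\<in>N. pmf p \<sigma>) \<le> 1" .
    qed (use al in simp)
    finally show ?thesis by simp
  qed
  finally have "(\<Sum>\<sigma>\<in>U. pmf p \<sigma> * Z Dc (fst \<sigma>) (snd \<sigma>)) < al" .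
  moreover have "al \<le> (\<Sum>\<sigma>\<in>U. pmf p \<sigma> * Z Dc (fst \<sigma>) (snd \<sigma>))"
    using hard Dc expd[of Dc] by force
  ultimately show False by simp
qed


lemma rep_run_snoc_prefix:
  "i < length pre \<Longrightarrow> rep_run A s (pre @ [x]) i = rep_run A s pre i"
  by (simp add: rep_run_def nth_append)

lemma rep_run_snoc_last:
  "rep_run A s (pre @ [x]) (length pre) = run (\<lambda>s' pp. A s pre pp) s x"
  by (simp add: rep_run_def)

lemma rep_length_le:
  assumes "\<forall>x\<in>set xss. length x \<le> L"
  shows "rep_length xss \<le> L * length xss"
  using assms by (induction xss) (auto simp: rep_length_def)

lemma o_linear_bound:
  assumes bo: "(\<lambda>n. real (b n)) \<in> o(\<lambda>n. real n)" and eta: "0 < eta"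
  shows "\<exists>K\<ge>0. \<forall>n. real (b n) \<le> eta * real n + K"
proof -
  have "eventually (\<lambda>n. norm (real (b n)) \<le> eta * norm (real n)) sequentially"
    by (rule landau_o.smallD[OF bo eta])
  then obtain N where N: "\<And>n. n \<ge> N \<Longrightarrow> real (b n) \<le> eta * real n"
    by (auto simp: eventually_sequentially)
  define K where "K = (\<Sum>n<N. real (b n))"
  have "real (b n) \<le> eta * real n + K" for n
  proof (cases "n \<ge> N")
    case True
    have "0 \<le> K" by (simp add: K_def sum_nonneg)
    then show ?thesis using N[OF True] by linarith
  next
    case False
    then have "real (b n) \<le> K" unfolding K_def by (intro member_le_sum) auto
    then show ?thesis using eta by (simp add: add_increasing)
  qed
  moreover have "K \<ge> 0" by (simp add: K_def sum_nonneg)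
  ultimately show ?thesis by blast
qed


lemma main_contra:
  fixes P :: "('s,'x,'y) online_problem" and A :: "(nat \<Rightarrow> bool) \<Rightarrow> 's \<Rightarrow> 'x list \<Rightarrow> 'y"
    and g :: "'s \<times> 'x list list \<Rightarrow> 's \<times> 'x list"
  assumes wf: "wf_problem P"
    and fin: "\<forall>(s,xs)\<in>inputs P. finite {ys. valid_out P s xs ys}"
    and g1: "\<forall>(s,xss)\<in>rep_inputs P. g (s,xss) \<in> inputs P \<and>
              real (length (snd (g (s,xss)))) \<le> real (rep_length xss) + k1 * real (length xss)"
    and g2: "\<forall>D. det_alg P D \<longrightarrow> (\<exists>A. det_rep_alg P A \<and>
            (\<forall>(s,xss)\<in>rep_inputs P.
               rep_cost P A s xss \<le> alg_cost P D (fst (g (s,xss))) (snd (g (s,xss))) + k2 * real (length xss)))"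
    and k1: "0 \<le> k1"
    and Aalg: "det_adv_alg P A"
    and bo: "(\<lambda>n. real (b n)) \<in> o(\<lambda>n. real n)"
    and adv: "\<forall>(s,xs)\<in>inputs P. \<exists>t. reads_at_most A t s xs (b (length xs)) \<and> alg_cost P (A t) s xs \<le> Bd (s,xs)"
    and link: "\<forall>(s,xss)\<in>rep_inputs P. Bd (g (s,xss)) + k2 * real (length xss)
                 \<le> ch * (\<Sum>i<length xss. OPT P s (xss!i)) + Kc * real (length xss) + gam"
    and ch: "1 \<le> ch"
    and hard: "\<forall>al>0. \<exists>p. finite (set_pmf p) \<and> set_pmf p \<subseteq> inputs P \<and>
            (\<forall>D. det_alg P D \<longrightarrow> measure_pmf.expectation p (\<lambda>(s,xs). alg_cost P D s xs)
                 \<ge> ch * measure_pmf.expectation p (\<lambda>(s,xs). OPT P s xs) + al)"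
  shows False
proof -
  define D0 where "D0 = A (\<lambda>_. False)"
  have D0: "det_alg P D0" using Aalg by (simp add: det_adv_alg_def D0_def)
  have Adet: "\<And>t. det_alg P (A t)" using Aalg by (simp add: det_adv_alg_def)
  define al where "al = \<bar>Kc\<bar> + 1"
  have al: "0 < al" by (simp add: al_def)
  obtain p where p: "finite (set_pmf p)" "set_pmf p \<subseteq> inputs P"
    "\<forall>D. det_alg P D \<longrightarrow> measure_pmf.expectation p (\<lambda>(s,xs). alg_cost P D s xs)
                 \<ge> ch * measure_pmf.expectation p (\<lambda>(s,xs). OPT P s xs) + al"
    using hard al by blast
  obtain s S w where S: "finite S" "S \<noteq> {}" "\<forall>x\<in>S. x \<noteq> [] \<and> (s,x) \<in> inputs P" "\<forall>x\<in>S. 0 \<le> w x" "sum w S = 1"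
    "\<forall>D. det_alg P D \<longrightarrow> al \<le> (\<Sum>x\<in>S. w x * (alg_cost P D s x - ch * OPT P s x))"
    using hard_state[OF wf D0 ch al p] by blast
  define Astar where "Astar = (\<lambda>t. SOME A'. det_rep_alg P A' \<and> (\<forall>(s,xss)\<in>rep_inputs P.
               rep_cost P A' s xss \<le> alg_cost P (A t) (fst (g (s,xss))) (snd (g (s,xss))) + k2 * real (length xss)))"
  have Astar: "det_rep_alg P (Astar t) \<and> (\<forall>(s,xss)\<in>rep_inputs P.
               rep_cost P (Astar t) s xss \<le> alg_cost P (A t) (fst (g (s,xss))) (snd (g (s,xss))) + k2 * real (length xss))" for t
    unfolding Astar_def by (rule someI_ex[OF g2[rule_format, OF Adet]])
  define L where "L = Max (length ` S)"
  have Lb: "\<And>x. x \<in> S \<Longrightarrow> length x \<le> L" unfolding L_def using S(1) by simp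
  define V where "V = (\<lambda>x. {ys. valid_out P s x ys})"
  define W where "W = 1 + (\<Sum>x\<in>S. (\<Sum>ys\<in>V x. \<bar>cost P s x ys\<bar>) + ch * \<bar>OPT P s x\<bar>)"
  have finV: "\<And>x. x \<in> S \<Longrightarrow> finite (V x)" using fin S(3) by (auto simp: V_def)
  have Wb: "\<bar>cost P s x ys - ch * OPT P s x\<bar> \<le> W" if x: "x \<in> S" and ys: "valid_out P s x ys" for x ys
  proof -
    have "\<bar>cost P s x ys - ch * OPT P s x\<bar> \<le> \<bar>cost P s x ys\<bar> + ch * \<bar>OPT P s x\<bar>"
    proof -
      have "\<bar>ch * OPT P s x\<bar> = ch * \<bar>OPT P s x\<bar>" using ch by (simp add: abs_mult)
      then show ?thesis using abs_triangle_ineq4[of "cost P s x ys" "ch * OPT P s x"] by linarith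
    qed
    also have "\<bar>cost P s x ys\<bar> \<le> (\<Sum>ys\<in>V x. \<bar>cost P s x ys\<bar>)"
      by (rule member_le_sum) (use ys finV[OF x] in \<open>auto simp: V_def\<close>)
    also have "(\<Sum>ys\<in>V x. \<bar>cost P s x ys\<bar>) + ch * \<bar>OPT P s x\<bar> \<le> (\<Sum>x\<in>S. (\<Sum>ys\<in>V x. \<bar>cost P s x ys\<bar>) + ch * \<bar>OPT P s x\<bar>)"
      by (rule member_le_sum[OF x _ S(1)]) (use ch in \<open>auto intro!: add_nonneg_nonneg sum_nonneg\<close>)
    finally show ?thesis unfolding W_def by simp
  qed
  have W1: "1 \<le> W" unfolding W_def using ch by (auto intro!: sum_nonneg add_nonneg_nonneg)
  define lam where "lam = 1 / (2 * W\<^sup>2)"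
  have lam0: "0 < lam" using W1 by (simp add: lam_def)
  have lamW: "lam * W \<le> 1" using W1 by (simp add: lam_def power2_eq_square field_simps)
  have lamW2: "lam\<^sup>2 * W\<^sup>2 = lam / 2" using W1 by (simp add: lam_def power2_eq_square field_simps)
  define q where "q = exp (- lam * al + lam\<^sup>2 * W\<^sup>2)"
  define Y where "Y = (\<lambda>t xss i. cost P s (xss!i) (rep_run (Astar t) s xss i) - ch * OPT P s (xss!i))"
  have pfx: "\<And>t pre x i. i < length pre \<Longrightarrow> Y t (pre @ [x]) i = Y t pre i"
    by (simp add: Y_def rep_run_snoc_prefix nth_append)
  have rnd: "(\<Sum>x\<in>S. w x * exp (- lam * Y t (pre @ [x]) (length pre))) \<le> q"
    if pre: "set pre \<subseteq> S" for t pre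
  proof -
    define D' where "D' = (\<lambda>s' pp. if s' = s then Astar t s pre pp else D0 s' pp)"
    have runD': "run D' s x = rep_run (Astar t) s (pre @ [x]) (length pre)" for x
      unfolding rep_run_snoc_last by (rule run_cong) (simp add: D'_def)
    have D': "det_alg P D'"
      unfolding det_alg_def
    proof clarify
      fix s' xs assume inp: "(s', xs) \<in> inputs P"
      show "valid_out P s' xs (run D' s' xs)"
      proof (cases "s' = s")
        case False
        have "run D' s' xs = run D0 s' xs" by (rule run_cong) (simp add: D'_def False)
        then show ?thesis using det_alg_valid[OF D0 inp] by simp
      next
        case True
        show ?thesis
        proof (cases "xs = []")
          case True then show ?thesis by (simp add: valid_out_def)
        next
          case False
          have ri: "(s, pre @ [xs]) \<in> rep_inputs P"
            using pre S(3) inp \<open>s' = s\<close> False unfolding rep_inputs_def by auto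
          have "valid_out P s ((pre @ [xs]) ! length pre) (rep_run (Astar t) s (pre @ [xs]) (length pre))"
            using conjunct1[OF Astar[of t]] ri unfolding det_rep_alg_def by fastforce
          then show ?thesis using runD'[of xs] \<open>s' = s\<close> by simp
        qed
      qed
    qed
    have Yeq: "Y t (pre @ [x]) (length pre) = alg_cost P D' s x - ch * OPT P s x" for x
      by (simp add: Y_def alg_cost_def runD')
    have "(\<Sum>x\<in>S. w x * exp (- lam * Y t (pre @ [x]) (length pre))) \<le> exp (- lam * al + lam\<^sup>2 * W\<^sup>2)"
    proof (rule round_bound[OF S(1) _ S(5) _ _ less_imp_le[OF lam0] lamW])
      show "\<And>x. x \<in> S \<Longrightarrow> 0 \<le> w x" using S(4) by blast
      fix x assume x: "x \<in> S"
      have "valid_out P s x (run D' s x)" using det_alg_valid[OF D'] S(3) x by blast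
      then show "\<bar>Y t (pre @ [x]) (length pre)\<bar> \<le> W" unfolding Yeq alg_cost_def by (rule Wb[OF x])
    next
      show "al \<le> (\<Sum>x\<in>S. w x * Y t (pre @ [x]) (length pre))"
        unfolding Yeq using S(6) D' by blast
    qed
    then show ?thesis by (simp add: q_def)
  qed
  define eta where "eta = lam / (8 * (real L + k1 + 1))"
  have eta0: "0 < eta" using lam0 k1 by (simp add: eta_def)
  obtain Kb where Kb: "Kb \<ge> 0" "\<And>n. real (b n) \<le> eta * real n + Kb"
    using o_linear_bound[OF bo eta0] by blast
  define M where "M = (\<lambda>r::nat. nat \<lfloor>eta * (real L + k1) * real r + Kb\<rfloor>)"
  have good: "\<exists>t\<in>trunc_tapes (M r). (\<Sum>i<r. Y t xss i) \<le> Kc * real r + gam"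
    if xss: "set xss \<subseteq> S" "length xss = r" and r: "r \<ge> 1" for xss r
  proof -
    have ri: "(s, xss) \<in> rep_inputs P"
      using xss r S(3) unfolding rep_inputs_def by auto
    obtain s2 xs2 where g: "g (s,xss) = (s2, xs2)" by (cases "g (s,xss)")
    have g1': "g (s,xss) \<in> inputs P \<and> real (length (snd (g (s,xss)))) \<le> real (rep_length xss) + k1 * real (length xss)"
      using bspec[OF g1 ri] by simp
    have inp2: "(s2, xs2) \<in> inputs P" and len2: "real (length xs2) \<le> real (rep_length xss) + k1 * real r"
      using g1' g xss(2) by auto
    obtain t0 where t0: "reads_at_most A t0 s2 xs2 (b (length xs2))" "alg_cost P (A t0) s2 xs2 \<le> Bd (s2, xs2)"
      using bspec[OF adv inp2] by auto
    have "rep_length xss \<le> L * r" using rep_length_le[of xss L] Lb xss by auto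
    then have rl: "real (rep_length xss) \<le> real L * real r" by (metis of_nat_le_iff of_nat_mult)
    have l2: "real (length xs2) \<le> (real L + k1) * real r"
      using len2 rl distrib_right[of "real L" k1 "real r"] by linarith
    have "eta * real (length xs2) \<le> eta * ((real L + k1) * real r)"
      by (rule mult_left_mono[OF l2]) (use eta0 in simp)
    then have "real (b (length xs2)) \<le> eta * (real L + k1) * real r + Kb"
      using Kb(2)[of "length xs2"] by (simp add: mult.assoc)
    then have bM: "b (length xs2) \<le> M r" unfolding M_def by (rule le_nat_floor)
    define t1 where "t1 = (\<lambda>j. j < M r \<and> t0 j)"
    have t1T: "t1 \<in> trunc_tapes (M r)" unfolding t1_def by (rule trunc_tapes_mem)
    have agree: "\<forall>j<b (length xs2). t1 j = t0 j" using bM by (simp add: t1_def)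
    have "run (A t1) s2 xs2 = run (A t0) s2 xs2"
      using t0(1) agree unfolding reads_at_most_def by blast
    then have ac: "alg_cost P (A t1) s2 xs2 = alg_cost P (A t0) s2 xs2" by (simp add: alg_cost_def)
    have "rep_cost P (Astar t1) s xss \<le> alg_cost P (A t1) (fst (g (s,xss))) (snd (g (s,xss))) + k2 * real (length xss)"
      using bspec[OF conjunct2[OF Astar[of t1]] ri] by simp
    also have "\<dots> = alg_cost P (A t1) s2 xs2 + k2 * real r" using g xss(2) by simp
    also have "\<dots> \<le> Bd (s2, xs2) + k2 * real r" using ac t0(2) by simp
    also have "\<dots> \<le> ch * (\<Sum>i<r. OPT P s (xss!i)) + Kc * real r + gam"
      using bspec[OF link ri] g xss(2) by simp
    finally have "(\<Sum>i<r. Y t1 xss i) \<le> Kc * real r + gam"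
      by (simp add: Y_def rep_cost_def xss(2) sum_subtractf sum_distrib_left)
    then show ?thesis using t1T by blast
  qed
  define r where "r = nat \<lceil>3 * (ln 2 * Kb + lam * \<bar>gam\<bar>) / lam\<rceil> + 1"
  have r1: "r \<ge> 1" by (simp add: r_def)
  have main: "1 \<le> real (card (trunc_tapes (M r))) * exp (lam * (Kc * real r + gam)) * q ^ r"
  proof (rule conc[OF S(1) _ S(5) trunc_tapes_finite _ less_imp_le[OF lam0]])
    show "\<And>x. x \<in> S \<Longrightarrow> 0 \<le> w x" using S(4) by blast
    show "0 \<le> q" by (simp add: q_def)
    show "\<And>t pre x i. i < length pre \<Longrightarrow> Y t (pre @ [x]) i = Y t pre i" by (rule pfx)
    show "\<And>t pre. t \<in> trunc_tapes (M r) \<Longrightarrow> set pre \<subseteq> S \<Longrightarrow>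
        (\<Sum>x\<in>S. w x * exp (- lam * Y t (pre @ [x]) (length pre))) \<le> q" using rnd by blast
    show "\<And>xss. set xss \<subseteq> S \<Longrightarrow> length xss = r \<Longrightarrow> \<exists>t\<in>trunc_tapes (M r). (\<Sum>i<r. Y t xss i) \<le> Kc * real r + gam"
      using good r1 by blast
  qed
  define X where "X = eta * (real L + k1) * real r + Kb"
  have X0: "0 \<le> X" unfolding X_def using eta0 k1 Kb(1) by (intro add_nonneg_nonneg mult_nonneg_nonneg) auto
  have MX: "real (M r) \<le> X"
  proof -
    have "real (M r) = real_of_int \<lfloor>X\<rfloor>" unfolding M_def X_def[symmetric] using X0 by simp
    also have "\<dots> \<le> X" by simp
    finally show ?thesis .
  qed
  have f1: "real (card (trunc_tapes (M r))) \<le> exp (real (M r) * ln 2)"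
  proof -
    have "real (card (trunc_tapes (M r))) \<le> 2 ^ M r"
      using trunc_tapes_card[of "M r"] by (metis of_nat_le_iff of_nat_numeral of_nat_power)
    also have "(2::real) ^ M r = exp (real (M r) * ln 2)" by (simp add: exp_of_nat_mult)
    finally show ?thesis .
  qed
  have f4: "q ^ r = exp (real r * (- lam * al + lam / 2))" unfolding q_def lamW2 by (simp add: exp_of_nat_mult)
  have "1 \<le> exp (real (M r) * ln 2) * exp (lam * (Kc * real r + gam)) * exp (real r * (- lam * al + lam / 2))"
  proof -
    have "real (card (trunc_tapes (M r))) * exp (lam * (Kc * real r + gam)) * q ^ r
       \<le> exp (real (M r) * ln 2) * exp (lam * (Kc * real r + gam)) * q ^ r"
      by (intro mult_right_mono f1) (auto simp: q_def)
    then show ?thesis using main unfolding f4 by linarith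
  qed
  also have "\<dots> = exp (real (M r) * ln 2 + lam * (Kc * real r + gam) + real r * (- lam * al + lam / 2))"
    by (simp add: exp_add)
  finally have one: "1 \<le> exp (real (M r) * ln 2 + lam * (Kc * real r + gam) + real r * (- lam * al + lam / 2))" .
  define C where "C = ln 2 * Kb + lam * \<bar>gam\<bar>"
  have C0: "0 \<le> C" unfolding C_def using Kb(1) lam0 by (intro add_nonneg_nonneg mult_nonneg_nonneg) auto
  have ln2: "0 < ln (2::real)" "ln (2::real) < 1" by (simp, rule ln_2_less_1)
  have etaL: "eta * (real L + k1) \<le> lam / 8"
  proof -
    have "eta * (real L + k1) = lam / 8 * ((real L + k1) / (real L + k1 + 1))"
      unfolding eta_def using k1 by (simp add: field_simps)
    also have "\<dots> \<le> lam / 8 * 1"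
      by (rule mult_left_mono) (use k1 lam0 in auto)
    finally show ?thesis by simp
  qed
  have e1: "real (M r) * ln 2 \<le> lam / 8 * real r + ln 2 * Kb"
  proof -
    have "real (M r) * ln 2 \<le> X * ln 2" using MX ln2 by (simp add: mult_right_mono)
    also have "X * ln 2 = eta * (real L + k1) * real r * ln 2 + ln 2 * Kb" by (simp add: X_def algebra_simps)
    also have "eta * (real L + k1) * real r * ln 2 \<le> eta * (real L + k1) * real r"
    proof -
      have "0 \<le> eta * (real L + k1) * real r" using eta0 k1 by simp
      then show ?thesis using ln2 by (simp add: mult_left_le)
    qed
    also have "eta * (real L + k1) * real r \<le> lam / 8 * real r" by (rule mult_right_mono[OF etaL]) simp
    finally show ?thesis by simp
  qed
  have e2: "lam * (Kc * real r + gam) + real r * (- lam * al + lam / 2) \<le> lam * \<bar>gam\<bar> - lam / 2 * real r"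
  proof -
    have "lam * Kc * real r \<le> lam * \<bar>Kc\<bar> * real r"
      by (rule mult_right_mono, rule mult_left_mono) (use lam0 in auto)
    moreover have "lam * gam \<le> lam * \<bar>gam\<bar>" by (rule mult_left_mono) (use lam0 in auto)
    ultimately show ?thesis by (simp add: al_def algebra_simps)
  qed
  have rbig: "C < 3 / 8 * lam * real r"
  proof -
    have "3 * C / lam \<le> real (nat \<lceil>3 * C / lam\<rceil>)" by linarith
    then have "3 * C / lam + 1 \<le> real r" unfolding r_def C_def by simp
    then have "lam * (3 * C / lam + 1) \<le> lam * real r" by (rule mult_left_mono) (use lam0 in simp)
    moreover have "lam * (3 * C / lam + 1) = 3 * C + lam" using lam0 by (simp add: field_simps)
    ultimately have "3 * C + lam \<le> lam * real r" by simp
    then show ?thesis using lam0 C0 by linarith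
  qed
  have "real (M r) * ln 2 + lam * (Kc * real r + gam) + real r * (- lam * al + lam / 2) < 0"
    using e1 e2 rbig unfolding C_def by linarith
  then have "exp (real (M r) * ln 2 + lam * (Kc * real r + gam) + real r * (- lam * al + lam / 2)) < 1"
    by simp
  with one show False by simp
qed


lemma rc_mono:
  assumes "rand_competitive P R c1" "c1 \<le> c2" "\<forall>(s,xs)\<in>inputs P. 0 \<le> OPT P s xs"
  shows "rand_competitive P R c2"
proof -
  obtain a where a: "\<forall>(s,xs)\<in>inputs P. enn2ereal (exp_cost P R s xs) \<le> ereal (c1 * OPT P s xs + a)"
    using assms(1) unfolding rand_competitive_def by blast
  have "\<forall>(s,xs)\<in>inputs P. enn2ereal (exp_cost P R s xs) \<le> ereal (c2 * OPT P s xs + a)"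
  proof clarify
    fix s xs assume inp: "(s,xs) \<in> inputs P"
    have "c1 * OPT P s xs \<le> c2 * OPT P s xs"
      using assms(2,3) inp by (intro mult_right_mono) auto
    then have e: "ereal (c1 * OPT P s xs + a) \<le> ereal (c2 * OPT P s xs + a)" by simp
    have a': "enn2ereal (exp_cost P R s xs) \<le> ereal (c1 * OPT P s xs + a)" using bspec[OF a inp] by simp
    show "enn2ereal (exp_cost P R s xs) \<le> ereal (c2 * OPT P s xs + a)"
      by (rule order_trans[OF a' e])
  qed
  then show ?thesis unfolding rand_competitive_def by blast
qed

lemma rc_bounded:
  assumes "rand_competitive P R c1" "\<forall>(s,xs)\<in>inputs P. 0 \<le> OPT P s xs \<and> OPT P s xs \<le> B"
  shows "rand_competitive P R c2"
proof -
  obtain a where a: "\<forall>(s,xs)\<in>inputs P. enn2ereal (exp_cost P R s xs) \<le> ereal (c1 * OPT P s xs + a)"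
    using assms(1) unfolding rand_competitive_def by blast
  have "\<forall>(s,xs)\<in>inputs P. enn2ereal (exp_cost P R s xs) \<le> ereal (c2 * OPT P s xs + (a + \<bar>c1\<bar> * B + \<bar>c2\<bar> * B))"
  proof clarify
    fix s xs assume inp: "(s,xs) \<in> inputs P"
    have O: "0 \<le> OPT P s xs" "OPT P s xs \<le> B" using assms(2) inp by auto
    have "c1 * OPT P s xs \<le> \<bar>c1\<bar> * B"
    proof -
      have "c1 * OPT P s xs \<le> \<bar>c1\<bar> * OPT P s xs" using O by (intro mult_right_mono) auto
      also have "\<dots> \<le> \<bar>c1\<bar> * B" using O by (intro mult_left_mono) auto
      finally show ?thesis .
    qed
    moreover have "- (\<bar>c2\<bar> * B) \<le> c2 * OPT P s xs"
    proof -
      have "\<bar>c2\<bar> * OPT P s xs \<le> \<bar>c2\<bar> * B" using O by (intro mult_left_mono) auto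
      moreover have "- (\<bar>c2\<bar> * OPT P s xs) \<le> c2 * OPT P s xs"
      proof -
        have e: "\<bar>c2 * OPT P s xs\<bar> = \<bar>c2\<bar> * OPT P s xs" using O by (simp add: abs_mult)
        have "- \<bar>c2 * OPT P s xs\<bar> \<le> c2 * OPT P s xs" by (cases "c2 * OPT P s xs \<ge> 0") auto
        then show ?thesis unfolding e .
      qed
      ultimately show ?thesis by linarith
    qed
    ultimately have "ereal (c1 * OPT P s xs + a) \<le> ereal (c2 * OPT P s xs + (a + \<bar>c1\<bar> * B + \<bar>c2\<bar> * B))"
      by simp
    then have e: "ereal (c1 * OPT P s xs + a) \<le> ereal (c2 * OPT P s xs + (a + \<bar>c1\<bar> * B + \<bar>c2\<bar> * B))" .
    have a': "enn2ereal (exp_cost P R s xs) \<le> ereal (c1 * OPT P s xs + a)" using bspec[OF a inp] by simp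
    show "enn2ereal (exp_cost P R s xs) \<le> ereal (c2 * OPT P s xs + (a + \<bar>c1\<bar> * B + \<bar>c2\<bar> * B))"
      by (rule order_trans[OF a' e])
  qed
  then show ?thesis unfolding rand_competitive_def by blast
qed


lemma dir21:
  fixes P :: "('s, 'x, 'y) online_problem" and c :: real
  assumes wf: "wf_problem P"
    and cp: "compact_problem P"
    and sr: "sigma_repeatable P"
    and H2: "\<forall>\<epsilon>>0. \<exists>A b. (\<lambda>n. real (b n)) \<in> o(\<lambda>n. real n) \<and> det_adv_competitive P A b (c + \<epsilon>)"
  shows "\<forall>\<epsilon>>0. \<exists>R. rand_alg P R \<and> rand_competitive P R (c + \<epsilon>)"
proof (rule ccontr)
  assume "\<not> ?thesis"
  then obtain e0 where e0: "e0 > 0" "\<And>R. rand_alg P R \<Longrightarrow> \<not> rand_competitive P R (c + e0)" by blast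
  have fin: "\<forall>(s,xs)\<in>inputs P. finite {ys. valid_out P s xs ys}"
    using sr unfolding sigma_repeatable_def by (rule conjunct1)
  obtain k1 k2 k3 :: real and g where k: "k1 \<ge> 0" "k2 \<ge> 0" "k3 \<ge> 0"
    and gA: "\<forall>(s,xss)\<in>rep_inputs P.
            g (s,xss) \<in> inputs P \<and>
            real (length (snd (g (s,xss)))) \<le> real (rep_length xss) + k1 * real (length xss) \<and>
            rep_OPT P s xss \<ge> OPT P (fst (g (s,xss))) (snd (g (s,xss))) - k3 * real (length xss)"
    and g2: "\<forall>D. det_alg P D \<longrightarrow> (\<exists>A. det_rep_alg P A \<and>
            (\<forall>(s,xss)\<in>rep_inputs P.
               rep_cost P A s xss \<le> alg_cost P D (fst (g (s,xss))) (snd (g (s,xss))) + k2 * real (length xss)))"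
  proof -
    have "\<exists>k1 k2 k3 :: real. k1 \<ge> 0 \<and> k2 \<ge> 0 \<and> k3 \<ge> 0 \<and>
      (\<exists>g :: 's \<times> 'x list list \<Rightarrow> 's \<times> 'x list.
        (\<forall>(s,xss)\<in>rep_inputs P.
            g (s,xss) \<in> inputs P \<and>
            real (length (snd (g (s,xss)))) \<le> real (rep_length xss) + k1 * real (length xss) \<and>
            rep_OPT P s xss \<ge> OPT P (fst (g (s,xss))) (snd (g (s,xss))) - k3 * real (length xss)) \<and>
        (\<forall>D. det_alg P D \<longrightarrow> (\<exists>A. det_rep_alg P A \<and>
            (\<forall>(s,xss)\<in>rep_inputs P.
               rep_cost P A s xss \<le> alg_cost P D (fst (g (s,xss))) (snd (g (s,xss))) + k2 * real (length xss)))))"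
      using sr unfolding sigma_repeatable_def by (rule conjunct2)
    then show ?thesis by (elim exE conjE) (rule that, assumption+)
  qed
  have g1: "\<forall>(s,xss)\<in>rep_inputs P. g (s,xss) \<in> inputs P \<and>
              real (length (snd (g (s,xss)))) \<le> real (rep_length xss) + k1 * real (length xss)"
  proof clarify
    fix s xss assume ri: "(s,xss) \<in> rep_inputs P"
    show "g (s,xss) \<in> inputs P \<and>
              real (length (snd (g (s,xss)))) \<le> real (rep_length xss) + k1 * real (length xss)"
      using bspec[OF gA ri] by simp
  qed
  have g3: "rep_OPT P s xss \<ge> OPT P (fst (g (s,xss))) (snd (g (s,xss))) - k3 * real (length xss)"
    and g3i: "g (s,xss) \<in> inputs P"
    if "(s,xss) \<in> rep_inputs P" for s xss
    using bspec[OF gA that] by auto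
  obtain A0 b0 where A0: "det_adv_competitive P A0 b0 (c + 1)" using H2[rule_format, OF zero_less_one[where 'a=real]] by blast
  define D0 where "D0 = A0 (\<lambda>_. False)"
  have D0: "det_alg P D0" using conjunct1[OF A0[unfolded det_adv_competitive_def]] unfolding det_adv_alg_def D0_def by blast
  have Onn: "\<forall>(s,xs)\<in>inputs P. 0 \<le> OPT P s xs"
  proof clarify
    fix s xs assume inp: "(s,xs) \<in> inputs P"
    have "finite {ys. valid_out P s xs ys}" using bspec[OF fin inp] by simp
    then show "0 \<le> OPT P s xs" using alg_cost_ge_OPT(2)[OF wf inp _ D0] by simp
  qed
  have sumOnn: "0 \<le> (\<Sum>i<length xss. OPT P s (xss!i))" if "(s,xss) \<in> rep_inputs P" for s xss
  proof (rule sum_nonneg)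
    fix i assume "i \<in> {..<length xss}"
    then have "(s, xss!i) \<in> inputs P" using that unfolding rep_inputs_def by auto
    from bspec[OF Onn this] show "0 \<le> OPT P s (xss!i)" by simp
  qed
  show False
  proof (cases "c \<ge> 1")
    case True
    define cA where "cA = c + e0 / 2"
    define ch where "ch = c + 3 * e0 / 4"
    obtain A b where Ab: "(\<lambda>n. real (b n)) \<in> o(\<lambda>n. real n)" "det_adv_competitive P A b cA"
    proof -
      have "e0 / 2 > 0" using e0 by simp
      from H2[rule_format, OF this] show ?thesis using that[unfolded cA_def] by blast
    qed
    obtain aA where Aalg: "det_adv_alg P A"
      and adv0: "\<forall>(s,xs)\<in>inputs P. \<exists>t. reads_at_most A t s xs (b (length xs)) \<and>
         alg_cost P (A t) s xs \<le> cA * OPT P s xs + aA"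
      using Ab(2) unfolding det_adv_competitive_def by blast
    define Bd where "Bd = (\<lambda>(s,xs). cA * OPT P s xs + aA)"
    have adv: "\<forall>(s,xs)\<in>inputs P. \<exists>t. reads_at_most A t s xs (b (length xs)) \<and> alg_cost P (A t) s xs \<le> Bd (s,xs)"
      using adv0 unfolding Bd_def by simp
    have prem: "\<forall>R c'. rand_alg P R \<and> c' < c + e0 \<longrightarrow> \<not> rand_competitive P R c'"
    proof (intro allI impI notI)
      fix R c' assume a: "rand_alg P R \<and> c' < c + e0" and rc: "rand_competitive P R c'"
      have "rand_competitive P R (c + e0)" by (rule rc_mono[OF rc _ Onn]) (use a in simp)
      then show False using e0(2) a by blast
    qed
    have c0: "c + e0 > 1" using True e0 by simp
    have hard0: "\<forall>\<epsilon>>0. \<forall>\<alpha>\<ge>0. \<exists>p :: ('s \<times> 'x list) pmf.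
            finite (set_pmf p) \<and> set_pmf p \<subseteq> inputs P \<and>
            (\<forall>D. det_alg P D \<longrightarrow>
               measure_pmf.expectation p (\<lambda>(s,xs). alg_cost P D s xs)
                 \<ge> (c + e0 - \<epsilon>) * measure_pmf.expectation p (\<lambda>(s,xs). OPT P s xs) + \<alpha>)"
    proof -
      have H: "\<forall>c::real. c > 1 \<longrightarrow>
        (\<forall>R c'. rand_alg P R \<and> c' < c \<longrightarrow> \<not> rand_competitive P R c') \<longrightarrow>
        (\<forall>\<epsilon>>0. \<forall>\<alpha>\<ge>0. \<exists>p :: ('s \<times> 'x list) pmf.
            finite (set_pmf p) \<and> set_pmf p \<subseteq> inputs P \<and>
            (\<forall>D. det_alg P D \<longrightarrow>
               measure_pmf.expectation p (\<lambda>(s,xs). alg_cost P D s xs)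
                 \<ge> (c - \<epsilon>) * measure_pmf.expectation p (\<lambda>(s,xs). OPT P s xs) + \<alpha>))"
        using cp unfolding compact_problem_def .
      show ?thesis using H[THEN spec[where x="c+e0"], THEN mp, OF c0, THEN mp, OF prem] .
    qed
    have hard: "\<forall>al>0. \<exists>p. finite (set_pmf p) \<and> set_pmf p \<subseteq> inputs P \<and>
            (\<forall>D. det_alg P D \<longrightarrow> measure_pmf.expectation p (\<lambda>(s,xs). alg_cost P D s xs)
                 \<ge> ch * measure_pmf.expectation p (\<lambda>(s,xs). OPT P s xs) + al)"
    proof (intro allI impI)
      fix al :: real assume al: "al > 0"
      have "c + e0 - e0 / 4 = ch" by (simp add: ch_def)
      moreover have "e0 / 4 > 0" using e0 by simp
      ultimately show "\<exists>p. finite (set_pmf p) \<and> set_pmf p \<subseteq> inputs P \<and>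
            (\<forall>D. det_alg P D \<longrightarrow> measure_pmf.expectation p (\<lambda>(s,xs). alg_cost P D s xs)
                 \<ge> ch * measure_pmf.expectation p (\<lambda>(s,xs). OPT P s xs) + al)"
        using hard0[rule_format, OF \<open>e0/4 > 0\<close> less_imp_le[OF al]] by simp
    qed
    have link: "\<forall>(s,xss)\<in>rep_inputs P. Bd (g (s,xss)) + k2 * real (length xss)
                 \<le> ch * (\<Sum>i<length xss. OPT P s (xss!i)) + (cA * k3 + k2) * real (length xss) + aA"
    proof clarify
      fix s xss assume ri: "(s,xss) \<in> rep_inputs P"
      obtain s2 xs2 where g: "g (s,xss) = (s2,xs2)" by (cases "g (s,xss)")
      have cA0: "0 \<le> cA" using True e0 by (simp add: cA_def)
      have "OPT P s2 xs2 \<le> rep_OPT P s xss + k3 * real (length xss)" using g3[OF ri] g by simp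
      also have "\<dots> \<le> (\<Sum>i<length xss. OPT P s (xss!i)) + k3 * real (length xss)"
        using rep_OPT_le[OF wf ri fin D0] by simp
      finally have "cA * OPT P s2 xs2 \<le> cA * ((\<Sum>i<length xss. OPT P s (xss!i)) + k3 * real (length xss))"
        by (rule mult_left_mono[OF _ cA0])
      moreover have "cA * (\<Sum>i<length xss. OPT P s (xss!i)) \<le> ch * (\<Sum>i<length xss. OPT P s (xss!i))"
        by (rule mult_right_mono[OF _ sumOnn[OF ri]]) (use e0 in \<open>simp add: cA_def ch_def\<close>)
      ultimately show "Bd (g (s,xss)) + k2 * real (length xss)
                 \<le> ch * (\<Sum>i<length xss. OPT P s (xss!i)) + (cA * k3 + k2) * real (length xss) + aA"
        unfolding g Bd_def by (simp add: algebra_simps)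
    qed
    show False
      by (rule main_contra[OF wf fin g1 g2 k(1) Aalg Ab(1) adv link _ hard])
         (use True e0 in \<open>simp add: ch_def\<close>)
  next
    case False
    define cA where "cA = c + (1 - c) / 2"
    have cA1: "cA < 1" using False unfolding cA_def by (simp add: field_simps)
    obtain A b where Ab: "(\<lambda>n. real (b n)) \<in> o(\<lambda>n. real n)" "det_adv_competitive P A b cA"
    proof -
      have "(1 - c) / 2 > 0" using False by simp
      from H2[rule_format, OF this] show ?thesis using that[unfolded cA_def] by blast
    qed
    obtain aA where Aalg: "det_adv_alg P A"
      and adv0: "\<forall>(s,xs)\<in>inputs P. \<exists>t. reads_at_most A t s xs (b (length xs)) \<and>
         alg_cost P (A t) s xs \<le> cA * OPT P s xs + aA"
      using Ab(2) unfolding det_adv_competitive_def by blast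
    define B where "B = aA / (1 - cA)"
    have OB: "\<forall>(s,xs)\<in>inputs P. 0 \<le> OPT P s xs \<and> OPT P s xs \<le> B"
    proof clarify
      fix s xs assume inp: "(s,xs) \<in> inputs P"
      obtain t where t: "alg_cost P (A t) s xs \<le> cA * OPT P s xs + aA" using bspec[OF adv0 inp] by auto
      have "det_alg P (A t)" using Aalg by (simp add: det_adv_alg_def)
      moreover have "finite {ys. valid_out P s xs ys}" using bspec[OF fin inp] by simp
      ultimately have "OPT P s xs \<le> alg_cost P (A t) s xs" using alg_cost_ge_OPT(1)[OF wf inp] by blast
      then have "(1 - cA) * OPT P s xs \<le> aA" using t by (simp add: algebra_simps)
      then have "OPT P s xs \<le> B" unfolding B_def using cA1 by (simp add: field_simps)
      then show "0 \<le> OPT P s xs \<and> OPT P s xs \<le> B" using Onn inp by auto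
    qed
    define Bd where "Bd = (\<lambda>(s,xs). cA * OPT P s xs + aA)"
    have adv: "\<forall>(s,xs)\<in>inputs P. \<exists>t. reads_at_most A t s xs (b (length xs)) \<and> alg_cost P (A t) s xs \<le> Bd (s,xs)"
      using adv0 unfolding Bd_def by simp
    have prem: "\<forall>R c'. rand_alg P R \<and> c' < 2 \<longrightarrow> \<not> rand_competitive P R c'"
    proof (intro allI impI notI)
      fix R c' assume a: "rand_alg P R \<and> c' < 2" and rc: "rand_competitive P R c'"
      have "rand_competitive P R (c + e0)" by (rule rc_bounded[OF rc OB])
      then show False using e0(2) a by blast
    qed
    have hard0: "\<forall>\<epsilon>>0. \<forall>\<alpha>\<ge>0. \<exists>p :: ('s \<times> 'x list) pmf.
            finite (set_pmf p) \<and> set_pmf p \<subseteq> inputs P \<and>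
            (\<forall>D. det_alg P D \<longrightarrow>
               measure_pmf.expectation p (\<lambda>(s,xs). alg_cost P D s xs)
                 \<ge> (2 - \<epsilon>) * measure_pmf.expectation p (\<lambda>(s,xs). OPT P s xs) + \<alpha>)"
    proof -
      have H: "\<forall>c::real. c > 1 \<longrightarrow>
        (\<forall>R c'. rand_alg P R \<and> c' < c \<longrightarrow> \<not> rand_competitive P R c') \<longrightarrow>
        (\<forall>\<epsilon>>0. \<forall>\<alpha>\<ge>0. \<exists>p :: ('s \<times> 'x list) pmf.
            finite (set_pmf p) \<and> set_pmf p \<subseteq> inputs P \<and>
            (\<forall>D. det_alg P D \<longrightarrow>
               measure_pmf.expectation p (\<lambda>(s,xs). alg_cost P D s xs)
                 \<ge> (c - \<epsilon>) * measure_pmf.expectation p (\<lambda>(s,xs). OPT P s xs) + \<alpha>))"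
        using cp unfolding compact_problem_def .
      have "(2::real) > 1" by simp
      from H[THEN spec[where x="2"], THEN mp, OF this, THEN mp, OF prem] show ?thesis .
    qed
    have hard: "\<forall>al>0. \<exists>p. finite (set_pmf p) \<and> set_pmf p \<subseteq> inputs P \<and>
            (\<forall>D. det_alg P D \<longrightarrow> measure_pmf.expectation p (\<lambda>(s,xs). alg_cost P D s xs)
                 \<ge> (3/2) * measure_pmf.expectation p (\<lambda>(s,xs). OPT P s xs) + al)"
    proof (intro allI impI)
      fix al :: real assume al: "al > 0"
      have "(2::real) - 1/2 = 3/2" by simp
      moreover have "(1/2::real) > 0" by simp
      ultimately show "\<exists>p. finite (set_pmf p) \<and> set_pmf p \<subseteq> inputs P \<and>
            (\<forall>D. det_alg P D \<longrightarrow> measure_pmf.expectation p (\<lambda>(s,xs). alg_cost P D s xs)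
                 \<ge> (3/2) * measure_pmf.expectation p (\<lambda>(s,xs). OPT P s xs) + al)"
        using hard0[rule_format, OF \<open>(1/2::real) > 0\<close> less_imp_le[OF al]] by simp
    qed
    have link: "\<forall>(s,xss)\<in>rep_inputs P. Bd (g (s,xss)) + k2 * real (length xss)
                 \<le> (3/2) * (\<Sum>i<length xss. OPT P s (xss!i)) + k2 * real (length xss) + (\<bar>cA\<bar> * B + aA)"
    proof clarify
      fix s xss assume ri: "(s,xss) \<in> rep_inputs P"
      obtain s2 xs2 where g: "g (s,xss) = (s2,xs2)" by (cases "g (s,xss)")
      have inp2: "(s2,xs2) \<in> inputs P" using g3i[OF ri] g by simp
      have O2: "0 \<le> OPT P s2 xs2" "OPT P s2 xs2 \<le> B" using OB inp2 by auto
      have "cA * OPT P s2 xs2 \<le> \<bar>cA\<bar> * OPT P s2 xs2" using O2 by (intro mult_right_mono) auto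
      also have "\<dots> \<le> \<bar>cA\<bar> * B" using O2 by (intro mult_left_mono) auto
      finally have "cA * OPT P s2 xs2 \<le> \<bar>cA\<bar> * B" .
      moreover have "0 \<le> (3/2) * (\<Sum>i<length xss. OPT P s (xss!i))" using sumOnn[OF ri] by simp
      ultimately show "Bd (g (s,xss)) + k2 * real (length xss)
                 \<le> (3/2) * (\<Sum>i<length xss. OPT P s (xss!i)) + k2 * real (length xss) + (\<bar>cA\<bar> * B + aA)"
        unfolding g Bd_def by simp
    qed
    show False
      by (rule main_contra[OF wf fin g1 g2 k(1) Aalg Ab(1) adv link _ hard]) simp
  qed
qed


definition dec :: "(nat \<Rightarrow> bool) \<Rightarrow> nat" where
  "dec t = (let l = (LEAST j. \<not> t j) in horner_sum of_bool 2 (map (\<lambda>i. t (l + 1 + i)) [0..<l]))"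

definition enc :: "nat \<Rightarrow> nat \<Rightarrow> nat \<Rightarrow> bool" where
  "enc l v j = (j < l \<or> (l < j \<and> j < 2 * l + 1 \<and> bit v (j - l - 1)))"

lemma dec_agree:
  assumes v: "v < 2 ^ l" and agree: "\<forall>j<2 * l + 1. t j = enc l v j"
  shows "dec t = v"
proof -
  have tl: "\<And>j. j < l \<Longrightarrow> t j" using agree by (auto simp: enc_def)
  have tl2: "\<not> t l" using agree by (auto simp: enc_def)
  have L: "(LEAST j. \<not> t j) = l"
    by (rule Least_equality) (use tl tl2 in \<open>auto simp: not_less[symmetric]\<close>)
  have m: "map (\<lambda>i. t (l + 1 + i)) [0..<l] = map (bit v) [0..<l]"
    using agree by (auto simp: enc_def)
  have "dec t = horner_sum of_bool 2 (map (bit v) [0..<l])" unfolding dec_def L Let_def m ..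
  also have "\<dots> = take_bit l v" by (rule horner_sum_bit_eq_take_bit)
  also have "\<dots> = v" using v by (rule take_bit_nat_eq_self)
  finally show ?thesis .
qed

lemma prod_encode_mono2: "i \<le> j \<Longrightarrow> prod_encode (n, i) \<le> prod_encode (n, j)"
proof -
  assume ij: "i \<le> j"
  have "(n + i) * Suc (n + i) \<le> (n + j) * Suc (n + j)" using ij by (intro mult_le_mono) auto
  then have "triangle (n + i) \<le> triangle (n + j)" unfolding triangle_def by (rule div_le_mono)
  then show ?thesis by (simp add: prod_encode_def)
qed


lemma exists_point:
  assumes M: "prob_space M" and finF: "finite F" and Fs: "F \<subseteq> sets M"
    and p: "\<forall>G\<in>F. p0 \<le> measure M G"
  shows "\<exists>D\<in>space M. p0 * real (card F) \<le> real (card {G\<in>F. D \<in> G})"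
proof (rule ccontr)
  assume neg: "\<not> ?thesis"
  define f where "f = (\<lambda>D. real (card {G\<in>F. D \<in> G}))"
  have f_eq: "f D = (\<Sum>G\<in>F. indicator G D)" for D :: 'a
  proof -
    have "(\<Sum>G\<in>F. indicator G D :: real) = (\<Sum>G\<in>F. if D \<in> G then 1 else 0)"
      by (simp add: indicator_def of_bool_def)
    also have "\<dots> = (\<Sum>G\<in>{G\<in>F. D \<in> G}. 1)" by (rule sum.inter_filter[OF finF, symmetric])
    also have "\<dots> = real (card {G\<in>F. D \<in> G})" by simp
    finally show ?thesis by (simp add: f_def)
  qed
  have fin_meas: "emeasure M G < \<infinity>" for G
    using finite_measure.emeasure_finite[OF prob_space.finite_measure[OF M], of G] by (simp add: less_top)
  have int_ind: "integrable M (indicator G :: 'a \<Rightarrow> real)" if "G \<in> F" for G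
    by (rule integrable_real_indicator) (use Fs that fin_meas in auto)
  have intf: "integrable M f"
    unfolding f_eq by (rule Bochner_Integration.integrable_sum) (rule int_ind)
  have "integral\<^sup>L M f = (\<Sum>G\<in>F. integral\<^sup>L M (indicator G))"
    unfolding f_eq by (rule Bochner_Integration.integral_sum) (rule int_ind)
  also have "\<dots> = (\<Sum>G\<in>F. measure M G)"
  proof (rule sum.cong[OF refl])
    fix G assume "G \<in> F"
    then have "G \<subseteq> space M" using Fs sets.sets_into_space by blast
    then show "integral\<^sup>L M (indicator G) = measure M G" by (simp add: Int_absorb2)
  qed
  also have "\<dots> \<ge> (\<Sum>G\<in>F. p0)" by (rule sum_mono) (use p in auto)
  finally have low: "p0 * real (card F) \<le> integral\<^sup>L M f" by (simp add: mult.commute)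
  have sub: "f ` space M \<subseteq> real ` {0..card F}"
  proof
    fix y assume "y \<in> f ` space M"
    then obtain D where y: "y = f D" by blast
    have "card {G\<in>F. D \<in> G} \<le> card F" by (rule card_mono[OF finF]) auto
    then show "y \<in> real ` {0..card F}" unfolding y f_def by auto
  qed
  have finV: "finite (f ` space M)" by (rule finite_subset[OF sub]) simp
  have neV: "f ` space M \<noteq> {}" using prob_space.not_empty[OF M] by simp
  define m where "m = Max (f ` space M)"
  have mlt: "m < p0 * real (card F)"
  proof -
    have "m \<in> f ` space M" unfolding m_def by (rule Max_in[OF finV neV])
    then show ?thesis using neg by (auto simp: f_def)
  qed
  have "integral\<^sup>L M f \<le> integral\<^sup>L M (\<lambda>_. m)"
  proof (rule integral_mono[OF intf])
    show "integrable M (\<lambda>_. m)" using prob_space.finite_measure[OF M] by (rule finite_measure.integrable_const)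
    fix D assume "D \<in> space M"
    then show "f D \<le> m" unfolding m_def by (intro Max_ge[OF finV]) simp
  qed
  also have "\<dots> = m" using prob_space.prob_space[OF M] by simp
  finally show False using low mlt by simp
qed

lemma greedy_cover:
  assumes M: "prob_space M" and Fs: "F \<subseteq> sets M" and finF: "finite F"
    and p: "\<forall>G\<in>F. p0 \<le> measure M G" and p0: "0 < p0" "p0 < 1"
    and card: "real (card F) < (1 / (1 - p0)) ^ j"
  shows "\<exists>L. set L \<subseteq> space M \<and> length L \<le> j \<and> (\<forall>G\<in>F. \<exists>D\<in>set L. D \<in> G)"
  using Fs finF p card
proof (induction j arbitrary: F)
  case 0
  then have "F = {}" by simp
  then show ?case by (intro exI[of _ "[]"]) simp
next
  case (Suc j)
  show ?case
  proof (cases "F = {}")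
    case True then show ?thesis by (intro exI[of _ "[]"]) simp
  next
    case False
    obtain D where D: "D \<in> space M" "p0 * real (card F) \<le> real (card {G\<in>F. D \<in> G})"
      using exists_point[OF M Suc.prems(2,1,3)] by blast
    define F' where "F' = {G\<in>F. D \<notin> G}"
    have cardF: "card F = card F' + card {G\<in>F. D \<in> G}"
    proof -
      have e: "F = F' \<union> {G\<in>F. D \<in> G}" "F' \<inter> {G\<in>F. D \<in> G} = {}" by (auto simp: F'_def)
      have f1: "finite F'" "finite {G\<in>F. D \<in> G}" using Suc.prems(2) by (auto simp: F'_def)
      show ?thesis by (subst e(1), rule card_Un_disjoint[OF f1 e(2)])
    qed
    have "real (card F') \<le> (1 - p0) * real (card F)" using D(2) cardF by (simp add: algebra_simps)
    also have "\<dots> < (1 - p0) * (1 / (1 - p0)) ^ Suc j"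
      by (rule mult_strict_left_mono[OF Suc.prems(4)]) (use p0 in simp)
    also have "\<dots> = (1 / (1 - p0)) ^ j" using p0 by (simp add: field_simps)
    finally have c': "real (card F') < (1 / (1 - p0)) ^ j" .
    obtain L' where L': "set L' \<subseteq> space M" "length L' \<le> j" "\<forall>G\<in>F'. \<exists>D\<in>set L'. D \<in> G"
    proof -
      have "F' \<subseteq> sets M" "finite F'" "\<forall>G\<in>F'. p0 \<le> measure M G"
        using Suc.prems(1-3) by (auto simp: F'_def)
      from Suc.IH[OF this c'] show ?thesis using that by blast
    qed
    show ?thesis
      by (rule exI[of _ "D # L'"]) (use L' D(1) in \<open>auto simp: F'_def\<close>)
  qed
qed


lemma markov_good:
  fixes P :: "('s,'x,'y) online_problem" and R
  assumes R: "rand_alg P R" and wf: "wf_problem P" and inp: "(s,xs) \<in> inputs P"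
    and E: "enn2ereal (exp_cost P R s xs) \<le> ereal beta" and dl: "0 < dl"
  shows "{D \<in> space R. alg_cost P D s xs \<le> (1 + dl) * (beta + 1)} \<in> sets R"
    "dl / (1 + dl) \<le> measure R {D \<in> space R. alg_cost P D s xs \<le> (1 + dl) * (beta + 1)}"
proof -
  interpret R: prob_space R using R by (simp add: rand_alg_def)
  define u where "u = (\<lambda>D. alg_cost P D s xs)"
  have um: "u \<in> borel_measurable R" using R inp unfolding rand_alg_def u_def by blast
  have unn: "\<And>D. D \<in> space R \<Longrightarrow> 0 \<le> u D"
  proof -
    fix D assume "D \<in> space R"
    then have "det_alg P D" using R by (simp add: rand_alg_def)
    then show "0 \<le> u D" unfolding u_def alg_cost_def by (rule wf_cost_nn[OF wf inp det_alg_valid[OF _ inp]])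
  qed
  have b0: "0 \<le> beta"
  proof -
    have "0 \<le> ereal beta" using enn2ereal_nonneg E by (rule order_trans)
    then show ?thesis by simp
  qed
  have nnle: "(\<integral>\<^sup>+ D. ennreal (u D) \<partial>R) \<le> ennreal beta"
  proof -
    have "enn2ereal (\<integral>\<^sup>+ D. ennreal (u D) \<partial>R) \<le> enn2ereal (ennreal beta)"
      using E b0 by (simp add: exp_cost_def u_def enn2ereal_ennreal)
    then show ?thesis by (simp add: less_eq_ennreal.rep_eq)
  qed
  have fin: "(\<integral>\<^sup>+ D. ennreal (u D) \<partial>R) < \<infinity>"
    using nnle by (simp add: le_less_trans)
  have AEnn: "AE D in R. 0 \<le> u D" using unn by (simp add: AE_I2)
  have int: "integrable R u" by (rule integrableI_nonneg[OF um AEnn fin])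
  have ile: "integral\<^sup>L R u \<le> beta"
  proof -
    have "integral\<^sup>L R u = enn2real (\<integral>\<^sup>+ D. ennreal (u D) \<partial>R)" by (rule integral_eq_nn_integral[OF um AEnn])
    also have "\<dots> \<le> enn2real (ennreal beta)" using nnle fin by (simp add: enn2real_mono)
    also have "\<dots> = beta" using b0 by simp
    finally show ?thesis .
  qed
  define c where "c = (1 + dl) * (beta + 1)"
  have c0: "0 < c" using dl b0 by (simp add: c_def)
  define Bad where "Bad = {D \<in> space R. c < u D}"
  have Bads: "Bad \<in> sets R" unfolding Bad_def using um by measurable
  have Good: "{D \<in> space R. u D \<le> c} = space R - Bad" by (auto simp: Bad_def)
  show Gs: "{D \<in> space R. alg_cost P D s xs \<le> (1 + dl) * (beta + 1)} \<in> sets R"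
    using Good Bads unfolding u_def c_def by auto
  have "measure R Bad \<le> measure R {D \<in> space R. c \<le> u D}"
  proof (rule R.finite_measure_mono)
    show "Bad \<subseteq> {D \<in> space R. c \<le> u D}" by (auto simp: Bad_def)
    show "{D \<in> space R. c \<le> u D} \<in> sets R" using um by measurable
  qed
  also have "\<dots> \<le> integral\<^sup>L R u / c"
    by (rule integral_Markov_inequality_measure[OF int Bads AEnn c0])
  also have "\<dots> \<le> beta / c" using ile c0 by (simp add: divide_right_mono)
  also have "\<dots> \<le> (beta + 1) / c" using c0 by (simp add: divide_right_mono)
  also have "\<dots> = 1 / (1 + dl)" using dl b0 by (simp add: c_def)
  finally have mb: "measure R Bad \<le> 1 / (1 + dl)" .
  have "measure R {D \<in> space R. u D \<le> c} = 1 - measure R Bad"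
    unfolding Good by (rule R.prob_compl[OF Bads])
  also have "\<dots> \<ge> 1 - 1 / (1 + dl)" using mb by simp
  also have "1 - 1 / (1 + dl) = dl / (1 + dl)" using dl by (simp add: field_simps)
  finally show "dl / (1 + dl) \<le> measure R {D \<in> space R. alg_cost P D s xs \<le> (1 + dl) * (beta + 1)}"
    unfolding u_def c_def .
qed


lemma log_o_lin: "(\<lambda>n::nat. K1 + K2 * ln (real n + 1)) \<in> o(\<lambda>n. real n)"
  by real_asymp

lemma least_pow_bound:
  fixes v :: nat
  shows "real (LEAST l. v < 2 ^ l) \<le> log 2 (real v + 1) + 1"
proof -
  define l0 where "l0 = nat \<lceil>log 2 (real v + 1)\<rceil>"
  have lg0: "0 \<le> log 2 (real v + 1)" by simp
  have "real v < real v + 1" by simp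
  also have "real v + 1 = 2 powr log 2 (real v + 1)" by simp
  also have "\<dots> \<le> 2 powr real l0" unfolding l0_def using lg0 by (intro powr_mono) auto
  also have "\<dots> = real (2 ^ l0)" by (simp add: powr_realpow)
  finally have "v < 2 ^ l0" by (simp only: of_nat_less_iff)
  then have "(LEAST l. v < 2 ^ l) \<le> l0" by (rule Least_le)
  then have "real (LEAST l. v < 2 ^ l) \<le> real l0" by simp
  also have "real l0 \<le> log 2 (real v + 1) + 1" unfolding l0_def using lg0 by linarith
  finally show ?thesis .
qed

lemma bits_o:
  fixes V :: "nat \<Rightarrow> nat" and Q k :: nat
  assumes V: "\<And>n. V n + 1 \<le> Q ^ 2 * (n + 1) ^ (2 * k + 2)" and Q: "Q \<ge> 1"
  shows "(\<lambda>n. real (2 * (LEAST l. V n < 2 ^ l) + 1)) \<in> o(\<lambda>n. real n)"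
proof -
  define K1 where "K1 = 2 * (2 * log 2 (real Q) + 1) + 1"
  define K2 where "K2 = 2 * real (2 * k + 2) / ln 2"
  have bound: "real (2 * (LEAST l. V n < 2 ^ l) + 1) \<le> K1 + K2 * ln (real n + 1)" for n
  proof -
    have "real (V n + 1) \<le> real (Q ^ 2 * (n + 1) ^ (2 * k + 2))"
      using V[of n] by (simp only: of_nat_le_iff)
    then have "real (V n) + 1 \<le> real Q ^ 2 * (real n + 1) ^ (2 * k + 2)"
      by (simp only: of_nat_add of_nat_mult of_nat_power of_nat_1)
    then have "log 2 (real (V n) + 1) \<le> log 2 (real Q ^ 2 * (real n + 1) ^ (2 * k + 2))"
      using Q by (subst log_le_cancel_iff) auto
    also have "\<dots> = log 2 (real Q ^ 2) + log 2 ((real n + 1) ^ (2 * k + 2))"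
    proof -
      have q: "real Q ^ 2 \<noteq> 0" "(real n + 1) ^ (2 * k + 2) \<noteq> 0" using Q by auto
      show ?thesis by (simp only: log_mult q simp_thms if_True)
    qed
    also have "log 2 (real Q ^ 2) = real 2 * log 2 (real Q)" by (rule log_nat_power) simp
    also have "log 2 ((real n + 1) ^ (2 * k + 2)) = real (2 * k + 2) * log 2 (real n + 1)"
      by (rule log_nat_power) simp
    finally have "log 2 (real (V n) + 1) \<le> 2 * log 2 (real Q) + real (2 * k + 2) * log 2 (real n + 1)" by simp
    moreover have "real (LEAST l. V n < 2 ^ l) \<le> log 2 (real (V n) + 1) + 1" by (rule least_pow_bound)
    moreover have "real (2 * k + 2) * log 2 (real n + 1) = real (2 * k + 2) / ln 2 * ln (real n + 1)"
      by (simp add: log_def)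
    ultimately have "real (LEAST l. V n < 2 ^ l) \<le> 2 * log 2 (real Q) + real (2 * k + 2) / ln 2 * ln (real n + 1) + 1"
      by linarith
    moreover have "K2 * ln (real n + 1) = 2 * (real (2 * k + 2) / ln 2 * ln (real n + 1))"
      unfolding K2_def by simp
    moreover have "real (2 * (LEAST l. V n < 2 ^ l) + 1) = 2 * real (LEAST l. V n < 2 ^ l) + 1" by simp
    ultimately show ?thesis unfolding K1_def
    proof -
      assume a1: "real (LEAST l. V n < 2 ^ l) \<le> 2 * log 2 (real Q) + real (2 * k + 2) / ln 2 * ln (real n + 1) + 1"
        and a2: "K2 * ln (real n + 1) = 2 * (real (2 * k + 2) / ln 2 * ln (real n + 1))"
        and a3: "real (2 * (LEAST l. V n < 2 ^ l) + 1) = 2 * real (LEAST l. V n < 2 ^ l) + 1"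
      define Zv where "Zv = real (2 * k + 2) / ln 2 * ln (real n + 1)"
      define Lv where "Lv = real (LEAST l. V n < 2 ^ l)"
      define Kv where "Kv = K2 * ln (real n + 1)"
      define Bv where "Bv = real (2 * (LEAST l. V n < 2 ^ l) + 1)"
      define Gv where "Gv = log 2 (real Q)"
      have "Lv \<le> 2 * Gv + Zv + 1" "Kv = 2 * Zv" "Bv = 2 * Lv + 1"
        using a1 a2 a3 unfolding Zv_def Lv_def Kv_def Bv_def Gv_def by auto
      then have "Bv \<le> 2 * (2 * Gv + 1) + 1 + Kv" by (simp add: algebra_simps)
      then show "real (2 * (LEAST l. V n < 2 ^ l) + 1) \<le> 2 * (2 * log 2 (real Q) + 1) + 1 + K2 * ln (real n + 1)"
        unfolding Bv_def Gv_def Kv_def .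
    qed
  qed
  have "(\<lambda>n. real (2 * (LEAST l. V n < 2 ^ l) + 1)) \<in> O(\<lambda>n::nat. K1 + K2 * ln (real n + 1))"
  proof (rule bigoI[where c=1], rule always_eventually, rule allI)
    fix n
    have "0 \<le> real (2 * (LEAST l. V n < 2 ^ l) + 1)" by simp
    then show "norm (real (2 * (LEAST l. V n < 2 ^ l) + 1)) \<le> 1 * norm (K1 + K2 * ln (real n + 1))"
      using bound[of n] by simp
  qed
  then show ?thesis using log_o_lin by (rule landau_o.big_small_trans)
qed


lemma OPT_nonneg:
  assumes wf: "wf_problem P" and inp: "(s,xs) \<in> inputs P" and D: "det_alg P D"
  shows "0 \<le> OPT P s xs"
  unfolding OPT_def
proof (rule cInf_greatest)
  show "{cost P s xs ys |ys. valid_out P s xs ys} \<noteq> {}" using det_alg_valid[OF D inp] by blast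
  fix x assume "x \<in> {cost P s xs ys |ys. valid_out P s xs ys}"
  then obtain ys where "x = cost P s xs ys" "valid_out P s xs ys" by blast
  then show "0 \<le> x" using wf_cost_nn[OF wf inp] by simp
qed

lemma V_bound:
  fixes Md C k n :: nat
  shows "prod_encode (n, Md * (C * (n+1)^k + 1)) + 1 \<le> (Md * C + Md + 1) ^ 2 * (n + 1) ^ (2 * k + 2)"
proof -
  define j where "j = Md * (C * (n+1)^k + 1)"
  define m where "m = n + j"
  define Q where "Q = Md * C + Md + 1"
  have t: "triangle m \<le> m * Suc m" unfolding triangle_def by simp
  have "prod_encode (n, j) + 1 = triangle m + n + 1" by (simp add: prod_encode_def m_def)
  also have "\<dots> \<le> m * Suc m + m + 1" using t by (simp add: m_def)
  also have "\<dots> = (m + 1) ^ 2" by (simp add: power2_eq_square)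
  also have "m + 1 \<le> Q * (n + 1) ^ (k + 1)"
  proof -
    have p1: "1 \<le> (n + 1) ^ (k + 1)" by (rule one_le_power) simp
    have p2: "n + 1 \<le> (n + 1) ^ (k + 1)"
      using power_increasing[of 1 "k+1" "n+1"] by simp
    have p3: "(n + 1) ^ k \<le> (n + 1) ^ (k + 1)"
      using power_increasing[of k "k+1" "n+1"] by simp
    have "m + 1 = (n + 1) + Md * C * (n + 1) ^ k + Md" by (simp add: m_def j_def algebra_simps)
    also have "\<dots> \<le> (n + 1) ^ (k + 1) + Md * C * (n + 1) ^ (k + 1) + Md * (n + 1) ^ (k + 1)"
      using p1 p2 p3 by (intro add_mono mult_le_mono) auto
    also have "\<dots> = Q * (n + 1) ^ (k + 1)" by (simp add: Q_def algebra_simps)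
    finally show ?thesis .
  qed
  then have "(m + 1) ^ 2 \<le> (Q * (n + 1) ^ (k + 1)) ^ 2" by (rule power_mono) simp
  also have "\<dots> = Q ^ 2 * ((n + 1) ^ (k + 1)) ^ 2" by (rule power_mult_distrib)
  also have "((n + 1) ^ (k + 1)) ^ 2 = (n + 1) ^ (2 * k + 2)"
  proof -
    have "((n + 1) ^ (k + 1)) ^ 2 = (n + 1) ^ ((k + 1) * 2)" by (rule power_mult[symmetric])
    also have "(k + 1) * 2 = 2 * k + 2" by simp
    finally show ?thesis .
  qed
  finally have "prod_encode (n, j) + 1 \<le> Q ^ 2 * (n + 1) ^ (2 * k + 2)" .
  then show ?thesis unfolding j_def Q_def .
qed


lemma dir12:
  fixes P :: "('s, 'x, 'y) online_problem" and c :: real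
  assumes wf: "wf_problem P" and fi: "few_inputs P"
    and H1: "\<forall>\<epsilon>>0. \<exists>R. rand_alg P R \<and> rand_competitive P R (c + \<epsilon>)"
  shows "\<forall>\<epsilon>>0. \<exists>A b. (\<lambda>n. real (b n)) \<in> o(\<lambda>n. real n) \<and> det_adv_competitive P A b (c + \<epsilon>)"
proof (intro allI impI)
  fix e :: real assume e: "e > 0"
  define c' where "c' = c + e / 2"
  obtain R where R: "rand_alg P R" "rand_competitive P R c'"
    using H1[rule_format, of "e/2"] e unfolding c'_def by auto
  obtain aR where aR: "\<forall>(s,xs)\<in>inputs P. enn2ereal (exp_cost P R s xs) \<le> ereal (c' * OPT P s xs + aR)"
    using R(2) unfolding rand_competitive_def by blast
  interpret R: prob_space R using R(1) by (simp add: rand_alg_def)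
  have spR: "\<And>D. D \<in> space R \<Longrightarrow> det_alg P D" using R(1) by (simp add: rand_alg_def)
  define D1 where "D1 = (SOME D. D \<in> space R)"
  have D1: "D1 \<in> space R" unfolding D1_def using R.not_empty by (simp add: some_in_eq)
  define dl where "dl = e / (2 * (\<bar>c'\<bar> + 1))"
  have dl: "0 < dl" using e by (simp add: dl_def)
  define p0 where "p0 = dl / (1 + dl)"
  have p0: "0 < p0" "p0 < 1" using dl by (auto simp: p0_def)
  have p0inv: "1 / (1 - p0) = 1 + dl" using dl by (simp add: p0_def field_simps)
  define Gs where "Gs = (\<lambda>(s,xs). {D \<in> space R. alg_cost P D s xs \<le> (1 + dl) * ((c' * OPT P s xs + aR) + 1)})"
  have Gs: "Gs \<sigma> \<in> sets R" "p0 \<le> measure R (Gs \<sigma>)" if "\<sigma> \<in> inputs P" for \<sigma>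
  proof -
    obtain s xs where \<sigma>: "\<sigma> = (s,xs)" by (cases \<sigma>)
    have inp: "(s,xs) \<in> inputs P" using that \<sigma> by simp
    have E: "enn2ereal (exp_cost P R s xs) \<le> ereal (c' * OPT P s xs + aR)" using bspec[OF aR inp] by simp
    show "Gs \<sigma> \<in> sets R" "p0 \<le> measure R (Gs \<sigma>)"
      using markov_good[OF R(1) wf inp E dl] unfolding \<sigma> Gs_def p0_def by simp_all
  qed
  obtain C k :: nat where fiCk: "\<And>n. finite {\<sigma>\<in>inputs P. length (snd \<sigma>) = n} \<and>
     card {\<sigma>\<in>inputs P. length (snd \<sigma>) = n} \<le> 2 ^ (C * (n + 1) ^ k)"
    using fi unfolding few_inputs_def by blast
  define Md where "Md = nat \<lceil>1 / dl\<rceil>"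
  have Md: "2 \<le> (1 + dl) ^ Md"
  proof -
    have "1 \<le> real Md * dl"
    proof -
      have "1 / dl \<le> real Md" unfolding Md_def by linarith
      then have "1 / dl * dl \<le> real Md * dl" using dl by (intro mult_right_mono) auto
      then show ?thesis using dl by simp
    qed
    moreover have "1 + real Md * dl \<le> (1 + dl) ^ Md" using Bernoulli_inequality[of dl Md] dl by simp
    ultimately show ?thesis by simp
  qed
  define j where "j = (\<lambda>n. Md * (C * (n + 1) ^ k + 1))"
  define In where "In = (\<lambda>n. {\<sigma>\<in>inputs P. length (snd \<sigma>) = n})"
  have cover: "\<exists>L. set L \<subseteq> space R \<and> length L \<le> j n \<and> (\<forall>G\<in>Gs ` In n. \<exists>D\<in>set L. D \<in> G)" for n
  proof (rule greedy_cover[OF R.prob_space_axioms _ _ _ p0])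
    show "Gs ` In n \<subseteq> sets R" using Gs(1) by (auto simp: In_def)
    show "finite (Gs ` In n)" using fiCk[of n] by (simp add: In_def)
    show "\<forall>G\<in>Gs ` In n. p0 \<le> measure R G" using Gs(2) by (auto simp: In_def)
    have "finite (In n)" using fiCk[of n] by (simp add: In_def)
    then have "card (Gs ` In n) \<le> card (In n)" by (rule card_image_le)
    then have "real (card (Gs ` In n)) \<le> real (card (In n))" by simp
    also have "\<dots> \<le> 2 ^ (C * (n + 1) ^ k)"
    proof -
      have "card (In n) \<le> 2 ^ (C * (n + 1) ^ k)" using fiCk[of n] unfolding In_def by simp
      then have "real (card (In n)) \<le> real (2 ^ (C * (n + 1) ^ k))" by (simp only: of_nat_le_iff)
      then show ?thesis by simp
    qed
    also have "\<dots> < 2 ^ (C * (n + 1) ^ k + 1)" by simp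
    also have "(2::real) ^ (C * (n + 1) ^ k + 1) \<le> ((1 + dl) ^ Md) ^ (C * (n + 1) ^ k + 1)"
      by (rule power_mono[OF Md]) simp
    also have "\<dots> = (1 + dl) ^ j n" by (simp only: j_def power_mult[symmetric])
    finally show "real (card (Gs ` In n)) < (1 / (1 - p0)) ^ j n" unfolding p0inv .
  qed
  obtain Ls where Ls: "\<And>n. set (Ls n) \<subseteq> space R \<and> length (Ls n) \<le> j n \<and> (\<forall>G\<in>Gs ` In n. \<exists>D\<in>set (Ls n). D \<in> G)"
    using cover by metis
  define pick where "pick = (\<lambda>v. case prod_decode v of (n, i) \<Rightarrow> if i < length (Ls n) then Ls n ! i else D1)"
  have pick: "pick v \<in> space R" for v
  proof -
    obtain n i where ni: "prod_decode v = (n, i)" by (cases "prod_decode v")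
    show ?thesis using Ls[of n] D1 by (auto simp: pick_def ni)
  qed
  define A where "A = (\<lambda>t. pick (dec t))"
  define V where "V = (\<lambda>n. prod_encode (n, j n))"
  define lb where "lb = (\<lambda>n. LEAST l. V n < 2 ^ l)"
  define b where "b = (\<lambda>n. 2 * lb n + 1)"
  have bo: "(\<lambda>n. real (b n)) \<in> o(\<lambda>n. real n)"
  proof -
    have "(\<lambda>n. real (2 * (LEAST l. V n < 2 ^ l) + 1)) \<in> o(\<lambda>n. real n)"
      by (rule bits_o[where Q="Md * C + Md + 1" and k=k]) (use V_bound in \<open>auto simp: V_def j_def\<close>)
    then show ?thesis by (simp add: b_def lb_def)
  qed
  have Vlt: "V n < 2 ^ lb n" for n
    unfolding lb_def by (rule LeastI[of _ "V n"]) simp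
  define aA where "aA = (1 + dl) * (aR + 1)"
  have "det_adv_competitive P A b (c + e)"
    unfolding det_adv_competitive_def
  proof (intro conjI)
    show "det_adv_alg P A" unfolding det_adv_alg_def A_def using spR pick by blast
    show "\<exists>\<alpha>. \<forall>(s, xs)\<in>inputs P. \<exists>t. reads_at_most A t s xs (b (length xs)) \<and> alg_cost P (A t) s xs \<le> (c + e) * OPT P s xs + \<alpha>"
    proof (intro exI[of _ aA] ballI, clarify)
      fix s xs assume inp: "(s, xs) \<in> inputs P"
      define n where "n = length xs"
      have "(s,xs) \<in> In n" by (simp add: In_def n_def inp)
      then have "Gs (s,xs) \<in> Gs ` In n" by blast
      then obtain D where D: "D \<in> set (Ls n)" "D \<in> Gs (s,xs)" using Ls[of n] by blast
      obtain i where i: "i < length (Ls n)" "Ls n ! i = D" using D(1) by (auto simp: in_set_conv_nth)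
      define v where "v = prod_encode (n, i)"
      have "v \<le> V n" unfolding v_def V_def using i(1) Ls[of n] by (intro prod_encode_mono2) auto
      then have vlt: "v < 2 ^ lb n" using Vlt[of n] by linarith
      define t where "t = enc (lb n) v"
      have pv: "pick v = D" by (simp add: pick_def v_def i)
      have At: "A t' = D" if "\<forall>j<2 * lb n + 1. t' j = t j" for t'
      proof -
        have "dec t' = v" by (rule dec_agree[OF vlt]) (use that in \<open>simp add: t_def\<close>)
        then show ?thesis by (simp add: A_def pv)
      qed
      have At0: "A t = D" by (rule At) simp
      show "\<exists>t. reads_at_most A t s xs (b (length xs)) \<and> alg_cost P (A t) s xs \<le> (c + e) * OPT P s xs + aA"
      proof (intro exI[of _ t] conjI)
        show "reads_at_most A t s xs (b (length xs))"
          unfolding reads_at_most_def b_def n_def[symmetric] using At At0 by simp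
        have Dc: "alg_cost P D s xs \<le> (1 + dl) * ((c' * OPT P s xs + aR) + 1)"
          using D(2) by (simp add: Gs_def)
        have O0: "0 \<le> OPT P s xs" by (rule OPT_nonneg[OF wf inp spR[OF D1]])
        have "(1 + dl) * c' \<le> c + e"
        proof -
          have "dl * c' \<le> dl * \<bar>c'\<bar>" using dl by (intro mult_left_mono) auto
          also have "dl * \<bar>c'\<bar> \<le> e / 2"
            using e by (simp add: dl_def field_simps)
          finally have X: "dl * c' \<le> e / 2" .
          have a: "(1 + dl) * c' = c' + dl * c'" by (simp add: algebra_simps)
          have ce: "c' = c + e / 2" by (simp add: c'_def)
          show ?thesis using a X ce by linarith
        qed
        then have "(1 + dl) * c' * OPT P s xs \<le> (c + e) * OPT P s xs"
          using O0 by (rule mult_right_mono)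
        then show "alg_cost P (A t) s xs \<le> (c + e) * OPT P s xs + aA"
          using Dc At0 by (simp add: aA_def algebra_simps)
      qed
    qed
  qed
  then show "\<exists>A b. (\<lambda>n. real (b n)) \<in> o(\<lambda>n. real n) \<and> det_adv_competitive P A b (c + e)"
    using bo by blast
qed


theorem theorem2:
  fixes P :: "('s, 'x, 'y) online_problem" and c :: real
  assumes "wf_problem P"
    and "compact_problem P"
    and "sigma_repeatable P"
    and "few_inputs P"
  shows "(\<forall>\<epsilon>>0. \<exists>R. rand_alg P R \<and> rand_competitive P R (c + \<epsilon>))
     \<longleftrightarrow> (\<forall>\<epsilon>>0. \<exists>A b. (\<lambda>n. real (b n)) \<in> o(\<lambda>n. real n) \<and> det_adv_competitive P A b (c + \<epsilon>))"
proof
  assume h: "\<forall>\<epsilon>>0. \<exists>R. rand_alg P R \<and> rand_competitive P R (c + \<epsilon>)"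
  show "\<forall>\<epsilon>>0. \<exists>A b. (\<lambda>n. real (b n)) \<in> o(\<lambda>n. real n) \<and> det_adv_competitive P A b (c + \<epsilon>)"
    by (rule dir12[OF assms(1) assms(4) h])
next
  assume h: "\<forall>\<epsilon>>0. \<exists>A b. (\<lambda>n. real (b n)) \<in> o(\<lambda>n. real n) \<and> det_adv_competitive P A b (c + \<epsilon>)"
  show "\<forall>\<epsilon>>0. \<exists>R. rand_alg P R \<and> rand_competitive P R (c + \<epsilon>)"
    by (rule dir21[OF assms(1) assms(2) assms(3) h])
qed

end
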